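(* Let $\sqrt7$ denote either square root of $7$, and let $$\psi_4(x)=-\frac{(9x-4\sqrt7-29)^3\,(x-2\sqrt7-4)^4}{(4\sqrt7+29)\,(7x-10\sqrt7-32)^4},$$ a genus 0 Belyi map of degree 7 with passport $[4\,3/2^2\,1^3/4\,3]$. Let $\mathcal{E}$ be the elliptic curve $y^2=x\big(x^2-(4\sqrt7+7)x+16\sqrt7+35\big)$. Then the function $$\mathcal{Q}\{\psi_4\}=\frac12+\frac{27x^2-(72\sqrt7+252)x+344\sqrt7+1036}{(4\sqrt7+2)\,(7x-10\sqrt7-32)^2}\,y$$ on $\mathcal{E}$ is a Belyi map of degree 7 with passport $[4\,3/4\,3/2^2\,3]$.
   Context: A Belyi map on a compact Riemann surface $X$ is a nonconstant meromorphic function $f:X\to\mathbb{P}^1$ unramified outside $\{0,1,\infty\}$. Its passport $[a_1^{p_1}\cdots/b_1^{q_1}\cdots/c_1^{r_1}\cdots]$ lists the ramification indices of the points in $f^{-1}(0)$, $f^{-1}(1)$, $f^{-1}(\infty)$ respectively, with exponents denoting repetition. For a function $\varphi_0$, $\mathcal{Q}\{\varphi_0\}:=\frac12+\frac12\sqrt{1-\varphi_0}$. *)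

theory Defs
  imports "HOL-Analysis.Analysis" "HOL-Library.Multiset"
begin

text \<open>Points of a projective plane cubic y^2 = cubic(x): affine points Some (x,y),
  and the point at infinity None.  The projective line is complex option (None = infinity).\<close>

type_synonym cpt = "(complex \<times> complex) option"
type_synonym p1 = "complex option"

definition ballE :: "cpt set \<Rightarrow> cpt \<Rightarrow> real \<Rightarrow> cpt set" where
  "ballE C P r = {Q \<in> C. (case P of
       None \<Rightarrow> (case Q of None \<Rightarrow> True | Some (x, y) \<Rightarrow> norm x > 1 / r)
     | Some (x0, y0) \<Rightarrow> (case Q of None \<Rightarrow> False
          | Some (x, y) \<Rightarrow> norm (x - x0) < r \<and> norm (y - y0) < r))}"

definition ballP :: "p1 \<Rightarrow> real \<Rightarrow> p1 set" where
  "ballP w r = (case w of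
       None \<Rightarrow> {None} \<union> {Some z | z. norm z > 1 / r}
     | Some w0 \<Rightarrow> {Some z | z. norm (z - w0) < r})"

text \<open>Ramification index = local degree: for all small neighbourhoods of P,
  every value close to (but different from) f P has exactly e preimages there.\<close>
definition has_ram_index :: "cpt set \<Rightarrow> (cpt \<Rightarrow> p1) \<Rightarrow> cpt \<Rightarrow> nat \<Rightarrow> bool" where
  "has_ram_index C f P e \<longleftrightarrow>
     (\<exists>r0>0. \<forall>r. 0 < r \<and> r \<le> r0 \<longrightarrow>
        (\<exists>\<delta>>0. \<forall>w \<in> ballP (f P) \<delta> - {f P}. card {Q \<in> ballE C P r. f Q = w} = e))"

definition ram_index :: "cpt set \<Rightarrow> (cpt \<Rightarrow> p1) \<Rightarrow> cpt \<Rightarrow> nat" where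
  "ram_index C f P = (THE e. has_ram_index C f P e)"

definition fib :: "cpt set \<Rightarrow> (cpt \<Rightarrow> p1) \<Rightarrow> p1 \<Rightarrow> cpt set" where
  "fib C f w = {Q \<in> C. f Q = w}"

definition passport_at :: "cpt set \<Rightarrow> (cpt \<Rightarrow> p1) \<Rightarrow> p1 \<Rightarrow> nat multiset" where
  "passport_at C f w = image_mset (ram_index C f) (mset_set (fib C f w))"

definition belyi_map_passport ::
  "cpt set \<Rightarrow> (cpt \<Rightarrow> p1) \<Rightarrow> nat \<Rightarrow> nat multiset \<Rightarrow> nat multiset \<Rightarrow> nat multiset \<Rightarrow> bool" where
  "belyi_map_passport C f n A B D \<longleftrightarrow>
     (\<forall>P \<in> C. \<exists>e. has_ram_index C f P e) \<and>
     (\<forall>w. finite (fib C f w) \<and> (\<Sum>Q \<in> fib C f w. ram_index C f Q) = n) \<and>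
     (\<forall>P \<in> C. f P \<notin> {Some 0, Some 1, None} \<longrightarrow> ram_index C f P = 1) \<and>
     passport_at C f (Some 0) = A \<and> passport_at C f (Some 1) = B \<and> passport_at C f None = D"

definition curveE :: "complex \<Rightarrow> cpt set" where
  "curveE s = insert None (Some ` {(x, y). y^2 = x * (x^2 - (4 * s + 7) * x + 16 * s + 35)})"

definition psi4 :: "complex \<Rightarrow> complex \<Rightarrow> complex" where
  "psi4 s x = - ((9 * x - 4 * s - 29)^3 * (x - 2 * s - 4)^4) / ((4 * s + 29) * (7 * x - 10 * s - 32)^4)"

definition Qval :: "complex \<Rightarrow> complex \<Rightarrow> complex \<Rightarrow> complex" where
  "Qval s x y = 1/2 + (27 * x^2 - (72 * s + 252)*x + 344 * s + 1036) / ((4 * s + 2) * (7 * x - 10 * s - 32)^2) * y"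

definition Qpsi4 :: "complex \<Rightarrow> cpt \<Rightarrow> p1" where
  "Qpsi4 s P = (case P of None \<Rightarrow> None
     | Some (x, y) \<Rightarrow> (if 7 * x - 10 * s - 32 = 0 then None else Some (Qval s x y)))"

end

theory Submission
  imports Defs "HOL-Complex_Analysis.Complex_Analysis" "HOL-Computational_Algebra.Fundamental_Theorem_Algebra"
begin


lemma cont_ball_bound:
  fixes k :: "complex \<Rightarrow> complex"
  assumes "continuous (at z0) k" "e > 0"
  obtains d where "d > 0" "\<And>z. z \<in> ball z0 d \<Longrightarrow> cmod (k z - k z0) < e"
  using assms unfolding continuous_at_eps_delta
  by (metis dist_commute dist_norm mem_ball)

lemma pos_lower_bound_compact:
  fixes h :: "complex \<Rightarrow> complex"
  assumes "compact K" "continuous_on K h" "\<And>z. z \<in> K \<Longrightarrow> h z \<noteq> 0"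
  obtains \<mu> where "\<mu> > 0" "\<And>z. z \<in> K \<Longrightarrow> \<mu> \<le> cmod (h z)"
proof (cases "K = {}")
  case True then show ?thesis using that[of 1] by auto
next
  case False
  have "continuous_on K (\<lambda>z. cmod (h z))" using assms(2) by (intro continuous_intros)
  then obtain x where x: "x \<in> K" "\<And>y. y \<in> K \<Longrightarrow> cmod (h x) \<le> cmod (h y)"
    using continuous_attains_inf[OF assms(1) False] by blast
  show ?thesis using that[of "cmod (h x)"] x assms(3) by auto
qed

lemma local_degree:
  fixes g k :: "complex \<Rightarrow> complex"
  assumes rho: "\<rho> > 0" and holk: "k holomorphic_on ball z0 \<rho>" and kz0: "k z0 \<noteq> 0" and n: "n > 0"
    and geq: "\<And>z. z \<in> ball z0 \<rho> \<Longrightarrow> g z = w0 + (z - z0)^n * k z"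
  shows "\<exists>\<rho>0>0. \<rho>0 \<le> \<rho> \<and> (\<forall>r. 0 < r \<and> r \<le> \<rho>0 \<longrightarrow> (\<exists>\<delta>>0. \<forall>w. 0 < cmod (w - w0) \<and> cmod (w - w0) < \<delta> \<longrightarrow>
            card {z \<in> ball z0 r. g z = w} = n \<and> {z \<in> ball z0 \<rho>0. g z = w} \<subseteq> ball z0 r))"
proof -
  have "continuous (at z0) k"
    using holk rho by (metis centre_in_ball continuous_on_interior holomorphic_on_imp_continuous_on interior_ball)
  then obtain d where d: "d > 0" "\<And>z. z \<in> ball z0 d \<Longrightarrow> cmod (k z - k z0) < cmod (k z0)"
    using cont_ball_bound kz0 by (metis zero_less_norm_iff)
  define \<rho>1 where "\<rho>1 = min d \<rho>"
  have \<rho>1: "\<rho>1 > 0" "\<rho>1 \<le> \<rho>" "ball z0 \<rho>1 \<subseteq> ball z0 \<rho>" using d rho by (auto simp: \<rho>1_def)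
  define u where "u z = k z / k z0" for z
  have u1: "cmod (u z - 1) < 1" if "z \<in> ball z0 \<rho>1" for z
  proof -
    have "u z - 1 = (k z - k z0) / k z0" using kz0 by (simp add: u_def field_simps)
    then show ?thesis using d(2)[of z] that kz0 by (simp add: \<rho>1_def norm_divide divide_less_eq)
  qed
  have unr: "u z \<notin> \<real>\<^sub>\<le>\<^sub>0" if "z \<in> ball z0 \<rho>1" for z
  proof
    assume "u z \<in> \<real>\<^sub>\<le>\<^sub>0"
    then obtain t where t: "u z = of_real t" "t \<le> 0" by (auto elim: nonpos_Reals_cases)
    have "cmod (u z - 1) = \<bar>t - 1\<bar>" using t by (metis norm_of_real of_real_1 of_real_diff)
    with u1[OF that] t show False by auto
  qed
  have unz: "u z \<noteq> 0" if "z \<in> ball z0 \<rho>1" for z using unr[OF that] by auto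
  define cc where "cc = exp (Ln (k z0) / of_nat n)"
  define m where "m z = cc * exp (Ln (u z) / of_nat n)" for z
  have expn: "exp (Ln a / of_nat n) ^ n = a" if "a \<noteq> 0" for a
  proof -
    have "exp (Ln a / of_nat n) ^ n = exp (of_nat n * (Ln a / of_nat n))" by (rule exp_of_nat_mult[symmetric])
    also have "\<dots> = a" using n that by simp
    finally show ?thesis .
  qed
  have mpow: "m z ^ n = k z" if "z \<in> ball z0 \<rho>1" for z
    using expn[OF kz0] expn[OF unz[OF that]] kz0 by (simp add: m_def cc_def power_mult_distrib u_def)
  have holu: "u holomorphic_on ball z0 \<rho>1"
    unfolding u_def using holk \<rho>1 by (intro holomorphic_intros) (auto intro: holomorphic_on_subset)
  have holm: "m holomorphic_on ball z0 \<rho>1"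
    unfolding m_def using holu unr by (intro holomorphic_intros) auto
  have mz0: "m z0 \<noteq> 0" by (simp add: m_def cc_def)
  define h where "h z = (z - z0) * m z" for z
  have holh: "h holomorphic_on ball z0 \<rho>1" unfolding h_def using holm by (intro holomorphic_intros)
  have hpow: "h z ^ n = (z - z0)^n * k z" if "z \<in> ball z0 \<rho>1" for z
    using mpow[OF that] by (simp add: h_def power_mult_distrib)
  have mder: "(m has_field_derivative deriv m z0) (at z0)"
    using holomorphic_derivI[OF holm open_ball, of z0] \<rho>1 by simp
  have "(h has_field_derivative ((1 - 0) * m z0 + deriv m z0 * (z0 - z0))) (at z0)"
    unfolding h_def by (intro DERIV_mult DERIV_diff DERIV_ident DERIV_const mder)
  then have dh: "deriv h z0 = m z0" by (simp add: DERIV_imp_deriv)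
  obtain \<rho>2 where \<rho>2: "\<rho>2 > 0" "ball z0 \<rho>2 \<subseteq> ball z0 \<rho>1" "inj_on h (ball z0 \<rho>2)"
    using has_complex_derivative_locally_injective[OF holh _ open_ball, of z0] dh mz0 \<rho>1 by auto
  have h0: "h z0 = 0" by (simp add: h_def)
  have hnz: "h z \<noteq> 0" if "z \<in> ball z0 \<rho>2" "z \<noteq> z0" for z
    using \<rho>2(3) that h0 \<rho>2(1) by (metis centre_in_ball inj_on_def)
  define \<rho>0 where "\<rho>0 = min \<rho>2 \<rho>1 / 2"
  have r0: "\<rho>0 > 0" "\<rho>0 \<le> \<rho>" "cball z0 \<rho>0 \<subseteq> ball z0 \<rho>2"
    using \<rho>2 \<rho>1 by (auto simp: \<rho>0_def subset_iff)
  have holh2: "h holomorphic_on ball z0 \<rho>2" using holh \<rho>2 holomorphic_on_subset by blast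
  show ?thesis
  proof (rule exI[of _ \<rho>0], intro conjI allI impI r0)
    fix r assume r: "0 < r \<and> r \<le> \<rho>0"
    have sub: "ball z0 r \<subseteq> ball z0 \<rho>2" using r r0 by auto
    have "open (h ` ball z0 r)"
      using open_mapping_thm3[of h "ball z0 r"] holh2 sub \<rho>2(3)
      by (meson holomorphic_on_subset inj_on_subset open_ball)
    moreover have "0 \<in> h ` ball z0 r" using h0 r by (metis centre_in_ball imageI)
    ultimately obtain \<epsilon> where \<epsilon>: "\<epsilon> > 0" "ball 0 \<epsilon> \<subseteq> h ` ball z0 r"
      by (meson open_contains_ball)
    define K where "K = cball z0 \<rho>0 \<inter> - ball z0 r"
    have cK: "compact K" unfolding K_def by (intro compact_Int_closed) auto
    have "continuous_on K h" using holh2 r0 unfolding K_def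
      by (meson holomorphic_on_imp_continuous_on continuous_on_subset Int_lower1 subset_trans)
    moreover have "h z \<noteq> 0" if "z \<in> K" for z
    proof -
      from that have "z \<in> ball z0 \<rho>2" "z \<noteq> z0" using r0(3) r by (auto simp: K_def)
      then show ?thesis by (rule hnz)
    qed
    ultimately obtain \<mu> where \<mu>: "\<mu> > 0" "\<And>z. z \<in> K \<Longrightarrow> \<mu> \<le> cmod (h z)"
      using pos_lower_bound_compact[OF cK] by metis
    define \<delta> where "\<delta> = min (\<epsilon>^n) (\<mu>^n)"
    show "\<exists>\<delta>>0. \<forall>w. 0 < cmod (w - w0) \<and> cmod (w - w0) < \<delta> \<longrightarrow>
            card {z \<in> ball z0 r. g z = w} = n \<and> {z \<in> ball z0 \<rho>0. g z = w} \<subseteq> ball z0 r"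
    proof (intro exI[of _ \<delta>] conjI allI impI)
      show "\<delta> > 0" using \<epsilon> \<mu> by (simp add: \<delta>_def)
      fix w assume w: "0 < cmod (w - w0) \<and> cmod (w - w0) < \<delta>"
      have gh: "g z = w0 + h z ^ n" if "z \<in> ball z0 \<rho>2" for z
        using geq hpow that \<rho>2 \<rho>1 by auto
      show "{z \<in> ball z0 \<rho>0. g z = w} \<subseteq> ball z0 r"
      proof
        fix z assume z: "z \<in> {z \<in> ball z0 \<rho>0. g z = w}"
        then have z2: "z \<in> ball z0 \<rho>2" using r0(3) z by (auto simp: subset_iff)
        have "h z ^ n = w - w0" using gh[OF z2] z by (simp add: algebra_simps)
        then have "cmod (h z ^ n) = cmod (w - w0)" by simp
        then have "cmod (h z) ^ n = cmod (w - w0)" by (simp add: norm_power)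
        then have "cmod (h z) ^ n < \<mu> ^ n" using w by (simp add: \<delta>_def)
        then have "cmod (h z) < \<mu>" using \<mu> by (meson power_less_imp_less_base less_imp_le)
        then have "z \<notin> K" using \<mu>(2)[of z] by linarith
        then show "z \<in> ball z0 r" using z by (auto simp: K_def)
      qed
      have "bij_betw h {z \<in> ball z0 r. g z = w} {v. v ^ n = w - w0}"
      proof (rule bij_betw_imageI)
        show "inj_on h {z \<in> ball z0 r. g z = w}" by (rule inj_on_subset[OF \<rho>2(3)]) (use sub in blast)
        show "h ` {z \<in> ball z0 r. g z = w} = {v. v ^ n = w - w0}"
        proof
          show "h ` {z \<in> ball z0 r. g z = w} \<subseteq> {v. v ^ n = w - w0}"
          proof safe
            fix z assume "z \<in> ball z0 r" "w = g z"
            then show "h z ^ n = g z - w0" using gh[of z] sub by auto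
          qed
          show "{v. v ^ n = w - w0} \<subseteq> h ` {z \<in> ball z0 r. g z = w}"
          proof
            fix v assume v: "v \<in> {v. v ^ n = w - w0}"
            then have "cmod (v ^ n) = cmod (w - w0)" by simp
            then have "cmod v ^ n = cmod (w - w0)" by (simp add: norm_power)
            then have "cmod v ^ n < \<epsilon> ^ n" using w by (simp add: \<delta>_def)
            then have "cmod v < \<epsilon>" using \<epsilon> by (meson power_less_imp_less_base less_imp_le)
            then obtain z where z: "z \<in> ball z0 r" "v = h z" using \<epsilon>(2) by (auto simp: subset_iff)
            then have "g z = w" using gh[of z] sub v by (auto simp: subset_iff)
            then show "v \<in> h ` {z \<in> ball z0 r. g z = w}" using z by auto
          qed
        qed
      qed
      then have "card {z \<in> ball z0 r. g z = w} = card {v. v ^ n = w - w0}" by (rule bij_betw_same_card)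
      also have "\<dots> = n" using card_nth_roots[of "w - w0" n] w n by auto
      finally show "card {z \<in> ball z0 r. g z = w} = n" .
    qed
  qed
qed


lemma ballE_mono: "0 < r \<Longrightarrow> r \<le> r' \<Longrightarrow> ballE C P r \<subseteq> ballE C P r'"
proof
  fix Q assume r: "0 < r" "r \<le> r'" and Q: "Q \<in> ballE C P r"
  have "1 / r' \<le> 1 / r" using r by (simp add: frac_le)
  then show "Q \<in> ballE C P r'" using Q r
    by (auto simp: ballE_def split: option.splits)
qed

lemma ballP_witness:
  assumes "\<delta> > 0"
  shows "\<exists>w. w \<in> ballP v \<delta> - {v}"
proof (cases v)
  case None
  have "1 / \<delta> < 2 / \<delta>" using assms by (simp add: divide_strict_right_mono)
  then have "Some (of_real (2 / \<delta>)) \<in> ballP v \<delta> - {v}" using assms None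
    by (auto simp: ballP_def norm_divide)
  then show ?thesis by blast
next
  case (Some a)
  have "Some (a + of_real (\<delta> / 2)) \<in> ballP v \<delta> - {v}" using assms Some
    by (auto simp: ballP_def)
  then show ?thesis by blast
qed

lemma ram_unique:
  assumes "has_ram_index C f P e1" "has_ram_index C f P e2"
  shows "e1 = e2"
proof -
  obtain r1 where r1: "r1 > 0" "\<forall>r. 0 < r \<and> r \<le> r1 \<longrightarrow>
        (\<exists>\<delta>>0. \<forall>w \<in> ballP (f P) \<delta> - {f P}. card {Q \<in> ballE C P r. f Q = w} = e1)"
    using assms(1) unfolding has_ram_index_def by blast
  obtain r2 where r2: "r2 > 0" "\<forall>r. 0 < r \<and> r \<le> r2 \<longrightarrow>
        (\<exists>\<delta>>0. \<forall>w \<in> ballP (f P) \<delta> - {f P}. card {Q \<in> ballE C P r. f Q = w} = e2)"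
    using assms(2) unfolding has_ram_index_def by blast
  define r where "r = min r1 r2"
  have r: "0 < r" "r \<le> r1" "r \<le> r2" using r1 r2 by (auto simp: r_def)
  obtain d1 where d1: "d1 > 0" "\<forall>w \<in> ballP (f P) d1 - {f P}. card {Q \<in> ballE C P r. f Q = w} = e1"
    using r1(2) r by blast
  obtain d2 where d2: "d2 > 0" "\<forall>w \<in> ballP (f P) d2 - {f P}. card {Q \<in> ballE C P r. f Q = w} = e2"
    using r2(2) r by blast
  define d where "d = min d1 d2"
  have d: "d > 0" using d1 d2 by (auto simp: d_def)
  have sub: "ballP v d \<subseteq> ballP v d1" "ballP v d \<subseteq> ballP v d2" for v
  proof -
    have "1 / d1 \<le> 1 / d" "1 / d2 \<le> 1 / d" using d d1 d2 by (auto simp: d_def frac_le)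
    then show "ballP v d \<subseteq> ballP v d1" "ballP v d \<subseteq> ballP v d2"
      by (auto simp: ballP_def d_def split: option.splits)
  qed
  obtain w where w: "w \<in> ballP (f P) d - {f P}" using ballP_witness[OF d] by blast
  have "card {Q \<in> ballE C P r. f Q = w} = e1" using d1(2) w sub(1)[of "f P"] by blast
  moreover have "card {Q \<in> ballE C P r. f Q = w} = e2" using d2(2) w sub(2)[of "f P"] by blast
  ultimately show ?thesis by simp
qed

lemma ram_index_eq: "has_ram_index C f P e \<Longrightarrow> ram_index C f P = e"
  unfolding ram_index_def by (rule the_equality) (auto intro: ram_unique)

lemma transfer:
  fixes C :: "cpt set" and f :: "cpt \<Rightarrow> p1" and \<phi> :: "complex \<Rightarrow> cpt" and V :: "complex \<Rightarrow> p1"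
    and g k :: "complex \<Rightarrow> complex"
  assumes rho: "\<rho> > 0" and holk: "k holomorphic_on ball z0 \<rho>" and kz0: "k z0 \<noteq> 0" and n: "n > 0"
    and geq: "\<And>z. z \<in> ball z0 \<rho> \<Longrightarrow> g z = w0 + (z - z0)^n * k z"
    and inj: "inj_on \<phi> (ball z0 \<rho>)" and P: "\<phi> z0 = P"
    and fV: "\<And>z. z \<in> ball z0 \<rho> \<Longrightarrow> f (\<phi> z) = V (g z)"
    and corr: "\<And>\<delta>. \<delta> > 0 \<Longrightarrow> \<exists>\<delta>'>0. \<forall>w \<in> ballP (f P) \<delta>' - {f P}. \<exists>w'. 0 < cmod (w' - w0) \<and> cmod (w' - w0) < \<delta> \<and> (\<forall>u. V u = w \<longleftrightarrow> u = w')"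
    and cont: "\<And>r. r > 0 \<Longrightarrow> \<exists>r'>0. \<forall>z\<in>ball z0 r'. \<phi> z \<in> ballE C P r"
    and opn: "\<And>\<rho>'. 0 < \<rho>' \<Longrightarrow> \<rho>' \<le> \<rho> \<Longrightarrow> \<exists>r>0. ballE C P r \<subseteq> \<phi> ` ball z0 \<rho>'"
  shows "has_ram_index C f P n"
proof -
  obtain \<rho>0 where r0: "\<rho>0 > 0" "\<rho>0 \<le> \<rho>" and L: "\<forall>r. 0 < r \<and> r \<le> \<rho>0 \<longrightarrow> (\<exists>\<delta>>0. \<forall>w. 0 < cmod (w - w0) \<and> cmod (w - w0) < \<delta> \<longrightarrow>
            card {z \<in> ball z0 r. g z = w} = n \<and> {z \<in> ball z0 \<rho>0. g z = w} \<subseteq> ball z0 r)"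
    using local_degree[OF rho holk kz0 n geq] by blast
  obtain R0 where R0: "R0 > 0" "ballE C P R0 \<subseteq> \<phi> ` ball z0 \<rho>0" using opn r0 by blast
  show ?thesis unfolding has_ram_index_def
  proof (rule exI[of _ R0], intro conjI allI impI R0)
    fix r assume r: "0 < r \<and> r \<le> R0"
    obtain r' where r': "r' > 0" "\<forall>z\<in>ball z0 r'. \<phi> z \<in> ballE C P r" using cont r by blast
    define r1 where "r1 = min r' \<rho>0"
    have r1: "0 < r1" "r1 \<le> \<rho>0" "r1 \<le> r'" using r' r0 by (auto simp: r1_def)
    obtain \<delta> where \<delta>: "\<delta> > 0" "\<forall>w. 0 < cmod (w - w0) \<and> cmod (w - w0) < \<delta> \<longrightarrow>
            card {z \<in> ball z0 r1. g z = w} = n \<and> {z \<in> ball z0 \<rho>0. g z = w} \<subseteq> ball z0 r1"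
      using L r1 by blast
    obtain \<delta>' where \<delta>': "\<delta>' > 0" "\<forall>w \<in> ballP (f P) \<delta>' - {f P}. \<exists>w'. 0 < cmod (w' - w0) \<and> cmod (w' - w0) < \<delta> \<and> (\<forall>u. V u = w \<longleftrightarrow> u = w')"
      using corr[OF \<delta>(1)] by blast
    show "\<exists>\<delta>>0. \<forall>w\<in>ballP (f P) \<delta> - {f P}. card {Q \<in> ballE C P r. f Q = w} = n"
    proof (rule exI[of _ \<delta>'], intro conjI ballI \<delta>'(1))
      fix w assume w: "w \<in> ballP (f P) \<delta>' - {f P}"
      then obtain w' where w': "0 < cmod (w' - w0)" "cmod (w' - w0) < \<delta>" "\<And>u. V u = w \<longleftrightarrow> u = w'"
        using \<delta>'(2) by blast
      have cardn: "card {z \<in> ball z0 r1. g z = w'} = n" and incl: "{z \<in> ball z0 \<rho>0. g z = w'} \<subseteq> ball z0 r1"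
        using \<delta>(2) w' by blast+
      have sub1: "ball z0 r1 \<subseteq> ball z0 \<rho>" using r1 r0 by auto
      have eq: "{Q \<in> ballE C P r. f Q = w} = \<phi> ` {z \<in> ball z0 r1. g z = w'}"
      proof
        show "{Q \<in> ballE C P r. f Q = w} \<subseteq> \<phi> ` {z \<in> ball z0 r1. g z = w'}"
        proof safe
          fix Q assume Q: "Q \<in> ballE C P r" "w = f Q"
          have "Q \<in> ballE C P R0" using ballE_mono[of r R0 C P] r Q by blast
          then obtain z where z: "z \<in> ball z0 \<rho>0" "Q = \<phi> z" using R0 by blast
          have zr: "z \<in> ball z0 \<rho>" using z r0 by auto
          have "V (g z) = w" using fV[OF zr] z Q by simp
          then have "g z = w'" using w' by blast
          then have "z \<in> ball z0 r1" using incl z by blast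
          then show "Q \<in> \<phi> ` {z \<in> ball z0 r1. g z = w'}" using z \<open>g z = w'\<close> Q by blast
        qed
        show "\<phi> ` {z \<in> ball z0 r1. g z = w'} \<subseteq> {Q \<in> ballE C P r. f Q = w}"
        proof safe
          fix z assume z: "z \<in> ball z0 r1" "w' = g z"
          show "\<phi> z \<in> ballE C P r" using r'(2) z r1 by auto
          have "V (g z) = w" using w' z by blast
          then show "f (\<phi> z) = w" using fV[of z] z sub1 by auto
        qed
      qed
      have "inj_on \<phi> {z \<in> ball z0 r1. g z = w'}" by (rule inj_on_subset[OF inj]) (use sub1 in blast)
      then show "card {Q \<in> ballE C P r. f Q = w} = n" using eq cardn by (simp add: card_image)
    qed
  qed
qed


definition "cb s x = x * (x^2 - (4 * s + 7) * x + 16 * s + 35)" for s x :: complex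
definition "NN s x = 27 * x^2 - (72 * s + 252) * x + 344 * s + 1036" for s x :: complex
definition "TT s x = 7 * x - 10 * s - 32" for s x :: complex
definition "PP s x = 9 * x - 4 * s - 29" for s x :: complex
definition "RR s x = x - 2 * s - 4" for s x :: complex
definition "cbd s x = 3 * x^2 - 2 * (4 * s + 7) * x + 16 * s + 35" for s x :: complex
definition "NNd s x = 54 * x - (72 * s + 252)" for s x :: complex

lemma sqrt7_lin:
  fixes s a b :: complex assumes "s^2 = 7" "a + b * s = 0" shows "a^2 = 7 * b^2"
proof -
  have "a = -(b * s)" using assms(2) by (simp add: eq_neg_iff_add_eq_0)
  then have "a^2 = b^2 * s^2" by (simp add: power_mult_distrib)
  then show ?thesis using assms(1) by simp
qed

lemma F1:
  fixes s x :: complex assumes s: "s^2 = 7"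
  shows "4 * NN s x^2 * cb s x * (4 * s + 29) = (4 * s + 2)^2 * ((4 * s + 29) * TT s x^4 + PP s x^3 * RR s x^4)"
proof -
  have "4 * NN s x^2 * cb s x * (4 * s + 29) - ((4 * s + 2)^2 * ((4 * s + 29) * TT s x^4 + PP s x^3 * RR s x^4)) = (s^2 - 7) * (13808640 + 70739968 * s + 123898368 * s^2 + 89915904 * s^3 + 31992832 * s^4 + 5793792 * s^5 + 503808 * s^6 + 16384 * s^7 - 630826560 * x - 819068928 * x * s - 479573440 * x * s^2 - 165614848 * x * s^3 - 33777408 * x * s^4 - 3540992 * x * s^5 - 143360 * x * s^6 + 426644288 * x^2 + 529302656 * x^2 * s + 268929728 * x^2 * s^2 + 70705152 * x^2 * s^3 + 9456384 * x^2 * s^4 + 494592 * x^2 * s^5 - 145756000 * x^3 - 156813056 * x^3 * s - 64950208 * x^3 * s^2 - 12208896 * x^3 * s^3 - 858368 * x^3 * s^4 + 29726304 * x^4 + 26222464 * x^4 * s + 7844224 * x^4 * s^2 + 802816 * x^4 * s^3 - 3863376 * x^5 - 2450304 * x^5 * s - 411264 * x^5 * s^2 + 299376 * x^6 + 108864 * x^6 * s - 11664 * x^7)"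
    unfolding NN_def cb_def TT_def PP_def RR_def by algebra
  then show ?thesis using s by simp
qed

lemma F2:
  fixes s x :: complex assumes s: "s^2 = 7"
  shows "27 * RR s x * TT s x + 4 * PP s x * TT s x - 28 * PP s x * RR s x = 7 * NN s x"
proof -
  have "27 * RR s x * TT s x + 4 * PP s x * TT s x - 28 * PP s x * RR s x - (7 * NN s x) = (s^2 - 7) * (476)"
    unfolding NN_def TT_def PP_def RR_def by algebra
  then show ?thesis using s by simp
qed

lemma B1:
  fixes s x :: complex assumes s: "s^2 = 7" and a: "NN s x = 0" and b: "cb s x = 0"
  shows False
proof -
  have "(5097897 - 1692738 * s + 2931215 * x + 297998 * x * s - 115525 * x^2 - 77830 * x^2 * s) * (NN s x) + (- 66807720 - 8790336 * s + 3119175 * x + 2101410 * x * s) * (cb s x) - 1205308188 = (s^2 - 7) * (- 582301872 + 83743072 * x + 20554528 * x^2 - 2801880 * x^3)"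
    unfolding NN_def cb_def by algebra
  then show False using s a b by simp
qed

lemma B2:
  fixes s x :: complex assumes s: "s^2 = 7" and a: "cb s x = 0" and b: "cbd s x = 0"
  shows False
proof -
  have "(- 37037 - 9572 * s + 8592 * x + 4848 * x * s) * (cb s x) + (- 2835 + 1296 * s + 34111 * x + 10780 * x * s - 2864 * x^2 - 1616 * x^2 * s) * (cbd s x) - 45927 = (s^2 - 7) * (20736 + 8960 * x + 3760 * x^2 - 6464 * x^3)"
    unfolding cb_def cbd_def by algebra
  then show False using s a b by simp
qed

lemma B3:
  fixes s x :: complex assumes s: "s^2 = 7" and a: "NN s x = 0" and b: "NNd s x = 0"
  shows False
proof -
  have "(28 - 2 * s) * (NN s x) + (56 + 14 * s - 14 * x + 1 * x * s) * (NNd s x) - 3024 = (s^2 - 7) * (- 1696 + 72 * x)"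
    unfolding NN_def NNd_def by algebra
  then show False using s a b by simp
qed

lemma NN_xinf:
  fixes s x :: complex assumes s: "s^2 = 7" and h: "7 * x = 32 + 10 * s"
  shows "NN s x \<noteq> 0"
proof
  assume F0: "NN s x = 0"
  have c: "5584 + 368 * s = 7^2 * (NN s x) - (7 * x - (32 + 10 * s)) * (- 900 - 234 * s + 189 * x) - (s^2 - 7) * (- 2340)"
    unfolding NN_def by algebra
  have "5584 + 368 * s = 0" unfolding c using F0 h s by simp
  from sqrt7_lin[OF s this] show False by simp
qed

lemma cb_xinf:
  fixes s x :: complex assumes s: "s^2 = 7" and h: "7 * x = 32 + 10 * s"
  shows "cb s x \<noteq> 0"
proof
  assume F0: "cb s x = 0"
  have c: "-188 + 326 * s = 7^3 * (cb s x) - (7 * x - (32 + 10 * s)) * (1171 + 38 * s - 180 * s^2 - 119 * x - 126 * x * s + 49 * x^2) - (s^2 - 7) * (- 5380 - 1800 * s)"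
    unfolding cb_def by algebra
  have "-188 + 326 * s = 0" unfolding c using F0 h s by simp
  from sqrt7_lin[OF s this] show False by simp
qed

lemma PP_xinf:
  fixes s x :: complex assumes s: "s^2 = 7" and h: "7 * x = 32 + 10 * s"
  shows "PP s x \<noteq> 0"
proof
  assume F0: "PP s x = 0"
  have c: "85 + 62 * s = 7^1 * (PP s x) - (7 * x - (32 + 10 * s)) * (9) - (s^2 - 7) * 0"
    unfolding PP_def by algebra
  have "85 + 62 * s = 0" unfolding c using F0 h s by simp
  from sqrt7_lin[OF s this] show False by simp
qed

lemma RR_xinf:
  fixes s x :: complex assumes s: "s^2 = 7" and h: "7 * x = 32 + 10 * s"
  shows "RR s x \<noteq> 0"
proof
  assume F0: "RR s x = 0"
  have c: "4 + -4 * s = 7^1 * (RR s x) - (7 * x - (32 + 10 * s)) * (1) - (s^2 - 7) * 0"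
    unfolding RR_def by algebra
  have "4 + -4 * s = 0" unfolding c using F0 h s by simp
  from sqrt7_lin[OF s this] show False by simp
qed

lemma TT_x1:
  fixes s x :: complex assumes s: "s^2 = 7" and h: "9 * x = 29 + 4 * s"
  shows "TT s x \<noteq> 0"
proof
  assume F0: "TT s x = 0"
  have c: "-85 + -62 * s = 9^1 * (TT s x) - (9 * x - (29 + 4 * s)) * (7) - (s^2 - 7) * 0"
    unfolding TT_def by algebra
  have "-85 + -62 * s = 0" unfolding c using F0 h s by simp
  from sqrt7_lin[OF s this] show False by simp
qed

lemma RR_x1:
  fixes s x :: complex assumes s: "s^2 = 7" and h: "9 * x = 29 + 4 * s"
  shows "RR s x \<noteq> 0"
proof
  assume F0: "RR s x = 0"
  have c: "-7 + -14 * s = 9^1 * (RR s x) - (9 * x - (29 + 4 * s)) * (1) - (s^2 - 7) * 0"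
    unfolding RR_def by algebra
  have "-7 + -14 * s = 0" unfolding c using F0 h s by simp
  from sqrt7_lin[OF s this] show False by simp
qed

lemma TT_x2:
  fixes s x :: complex assumes s: "s^2 = 7" and h: "1 * x = 4 + 2 * s"
  shows "TT s x \<noteq> 0"
proof
  assume F0: "TT s x = 0"
  have c: "-4 + 4 * s = 1^1 * (TT s x) - (1 * x - (4 + 2 * s)) * (7) - (s^2 - 7) * 0"
    unfolding TT_def by algebra
  have "-4 + 4 * s = 0" unfolding c using F0 h s by simp
  from sqrt7_lin[OF s this] show False by simp
qed

lemma PP_x2:
  fixes s x :: complex assumes s: "s^2 = 7" and h: "1 * x = 4 + 2 * s"
  shows "PP s x \<noteq> 0"
proof
  assume F0: "PP s x = 0"
  have c: "7 + 14 * s = 1^1 * (PP s x) - (1 * x - (4 + 2 * s)) * (9) - (s^2 - 7) * 0"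
    unfolding PP_def by algebra
  have "7 + 14 * s = 0" unfolding c using F0 h s by simp
  from sqrt7_lin[OF s this] show False by simp
qed



lemma curve_Some: "Some (x, y) \<in> curveE s \<longleftrightarrow> y^2 = cb s x"
  by (auto simp: curveE_def cb_def)
lemma curve_None: "None \<in> curveE s" by (simp add: curveE_def)
lemma Qpsi4_Some: "Qpsi4 s (Some (x, y)) = (if TT s x = 0 then None else Some (Qval s x y))"
  by (simp add: Qpsi4_def TT_def)
lemma Qpsi4_None: "Qpsi4 s None = None" by (simp add: Qpsi4_def)
lemma Qval_alt: "Qval s x y = 1/2 + NN s x / ((4 * s + 2) * TT s x ^ 2) * y"
  by (simp add: Qval_def NN_def TT_def)
lemma psi4_alt: "psi4 s x = - (PP s x^3 * RR s x^4) / ((4 * s + 29) * TT s x^4)"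
  by (simp add: psi4_def PP_def RR_def TT_def)

lemma c42: assumes "(s::complex)^2 = 7" shows "4 * s + 2 \<noteq> 0"
proof
  assume "4 * s + 2 = 0" then have "2 + 4 * s = 0" by (simp add: add.commute)
  from sqrt7_lin[OF assms this] show False by simp
qed
lemma c429: assumes "(s::complex)^2 = 7" shows "4 * s + 29 \<noteq> 0"
proof
  assume "4 * s + 29 = 0" then have "29 + 4 * s = 0" by (simp add: add.commute)
  from sqrt7_lin[OF assms this] show False by simp
qed

lemma one_minus_psi4:
  assumes s: "s^2 = 7" and T: "TT s x \<noteq> 0"
  shows "1 - psi4 s x = ((4 * s + 29) * TT s x^4 + PP s x^3 * RR s x^4) / ((4 * s + 29) * TT s x^4)"
proof -
  have B: "(4 * s + 29) * TT s x^4 \<noteq> 0" using T c429[OF s] by simp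
  have "1 - psi4 s x = 1 + PP s x^3 * RR s x^4 / ((4 * s + 29) * TT s x^4)" by (simp add: psi4_alt)
  also have "\<dots> = (1 * ((4 * s + 29) * TT s x^4) + PP s x^3 * RR s x^4) / ((4 * s + 29) * TT s x^4)"
    using B by (rule add_divide_eq_iff)
  finally show ?thesis by simp
qed

lemma key_identity:
  assumes s: "s^2 = 7" and y: "y^2 = cb s x" and T: "TT s x \<noteq> 0"
  shows "(2 * Qval s x y - 1)^2 = 1 - psi4 s x"
proof -
  have nz: "(4 * s + 2) * TT s x ^ 2 \<noteq> 0" using c42[OF s] T by simp
  have e1: "2 * Qval s x y - 1 = 2 * (NN s x / ((4 * s + 2) * TT s x ^ 2) * y)"
    by (simp add: Qval_alt algebra_simps)
  have e2: "(2 * Qval s x y - 1)^2 = 4 * NN s x^2 * cb s x / ((4 * s + 2)^2 * TT s x ^ 4)"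
    unfolding e1 by (simp add: power_divide power_mult_distrib y[symmetric] flip: power_mult)
  have F: "4 * NN s x^2 * cb s x * (4 * s + 29) = (4 * s + 2)^2 * ((4 * s + 29) * TT s x^4 + PP s x^3 * RR s x^4)"
    by (rule F1[OF s])
  have nz2: "(4 * s + 2)^2 * TT s x ^ 4 \<noteq> 0" "(4 * s + 29) * TT s x^4 \<noteq> 0"
    using c42[OF s] c429[OF s] T by auto
  have "4 * NN s x^2 * cb s x / ((4 * s + 2)^2 * TT s x ^ 4) =
      ((4 * s + 29) * TT s x^4 + PP s x^3 * RR s x^4) / ((4 * s + 29) * TT s x^4)"
    using nz2 F by (simp add: frac_eq_eq) algebra
  then show ?thesis using e2 one_minus_psi4[OF s T] by simp
qed

definition "Gp (s::complex) c = smult ((4 * s + 29) * (1 - c)) ([:-(10 * s + 32), 7:]^4) + [:-(4 * s + 29), 9:]^3 * [:-(2 * s + 4), 1:]^4"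

lemma poly_Gp: "poly (Gp s c) x = (4 * s + 29) * (1 - c) * TT s x^4 + PP s x^3 * RR s x^4"
  by (simp add: Gp_def TT_def PP_def RR_def algebra_simps)

lemma degree_Gp: "degree (Gp s c) = 7"
proof -
  have d2: "degree ([:-(4 * s + 29), 9:]^3 * [:-(2 * s + 4), 1:]^4 :: complex poly) = 7"
    by (simp add: degree_mult_eq degree_power_eq)
  have d1: "degree (smult ((4 * s + 29) * (1 - c)) ([:-(10 * s + 32), 7:]^4 :: complex poly)) \<le> 4"
    by (rule order.trans[OF degree_smult_le]) (simp add: degree_power_eq)
  show ?thesis unfolding Gp_def using d1 d2 by (subst degree_add_eq_right) auto
qed

lemma Gp_nz: "Gp s c \<noteq> 0" using degree_Gp[of s c] by auto

lemma Gp_Q: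
  assumes s: "s^2 = 7" and y: "y^2 = cb s x" and T: "TT s x \<noteq> 0"
  shows "poly (Gp s c) x = (4 * s + 29) * TT s x^4 * ((2 * Qval s x y - 1)^2 - c)"
proof -
  define B where "B = (4 * s + 29) * TT s x^4"
  define A where "A = PP s x^3 * RR s x^4"
  have B: "B \<noteq> 0" using T c429[OF s] by (simp add: B_def)
  have "(2 * Qval s x y - 1)^2 = (B + A) / B"
    unfolding key_identity[OF s y T] one_minus_psi4[OF s T] A_def B_def ..
  moreover have "B * ((B + A) / B - c) = B + A - c * B" using B by (simp add: right_diff_distrib)
  ultimately show ?thesis unfolding poly_Gp by (simp add: A_def B_def algebra_simps)
qed


lemma ballE_Some: "Q \<in> ballE C (Some (x0, y0)) r \<longleftrightarrow> Q \<in> C \<and> (\<exists>x y. Q = Some (x, y) \<and> cmod (x - x0) < r \<and> cmod (y - y0) < r)"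
  by (auto simp: ballE_def split: option.splits)
lemma ballE_None: "Q \<in> ballE C None r \<longleftrightarrow> Q \<in> C \<and> (Q = None \<or> (\<exists>x y. Q = Some (x, y) \<and> cmod x > 1 / r))"
  by (auto simp: ballE_def split: option.splits)

lemma near1_notnonpos: "cmod (u - 1) < 1 \<Longrightarrow> u \<notin> \<real>\<^sub>\<le>\<^sub>0"
proof
  assume u: "cmod (u - 1) < 1" "u \<in> \<real>\<^sub>\<le>\<^sub>0"
  then obtain t where t: "u = of_real t" "t \<le> 0" by (auto elim: nonpos_Reals_cases)
  have "cmod (u - 1) = \<bar>t - 1\<bar>" using t by (metis norm_of_real of_real_1 of_real_diff)
  with u t show False by auto
qed

lemma isCont_holo: "f holomorphic_on ball z0 r \<Longrightarrow> r > 0 \<Longrightarrow> isCont f z0"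
  by (metis centre_in_ball continuous_on_interior holomorphic_on_imp_continuous_on interior_ball)

lemma holo_cb: "(cb s) holomorphic_on A" unfolding cb_def by (intro holomorphic_intros)
lemma isCont_cb: "isCont (cb s) x" unfolding cb_def by (intro continuous_intros)
lemma isCont_NN: "isCont (NN s) x" unfolding NN_def by (intro continuous_intros)
lemma isCont_TT: "isCont (TT s) x" unfolding TT_def by (intro continuous_intros)
lemma holo_NN: "(NN s) holomorphic_on A" unfolding NN_def by (intro holomorphic_intros)
lemma holo_TT: "(TT s) holomorphic_on A" unfolding TT_def by (intro holomorphic_intros)

lemma xchart:
  assumes s: "s^2 = 7" and y0: "y0^2 = cb s x0" "y0 \<noteq> 0"
  obtains \<rho> Y where "\<rho> > 0" "Y holomorphic_on ball x0 \<rho>" "Y x0 = y0"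
    "\<And>z. z \<in> ball x0 \<rho> \<Longrightarrow> (Y z)^2 = cb s z"
    "\<And>r. r > 0 \<Longrightarrow> \<exists>r'>0. \<forall>z\<in>ball x0 r'. Some (z, Y z) \<in> ballE (curveE s) (Some (x0, y0)) r"
    "\<And>\<rho>'. 0 < \<rho>' \<Longrightarrow> \<rho>' \<le> \<rho> \<Longrightarrow> \<exists>r>0. ballE (curveE s) (Some (x0, y0)) r \<subseteq> (\<lambda>z. Some (z, Y z)) ` ball x0 \<rho>'"
proof -
  define u where "u z = cb s z / y0^2" for z
  have u0: "u x0 = 1" unfolding u_def y0(1)[symmetric] using y0(2) by simp
  have "isCont u x0" unfolding u_def using y0(2)
    by (intro continuous_intros isCont_cb) auto
  then obtain \<rho>1 where \<rho>1: "\<rho>1 > 0" "\<And>z. z \<in> ball x0 \<rho>1 \<Longrightarrow> cmod (u z - 1) < 1"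
    using cont_ball_bound[of x0 u 1] u0 by auto
  define Y where "Y z = y0 * csqrt (u z)" for z
  have holY: "Y holomorphic_on ball x0 \<rho>1" unfolding Y_def u_def
    using \<rho>1(2) near1_notnonpos unfolding u_def
    by (intro holomorphic_intros holo_cb) auto
  have Y0: "Y x0 = y0" by (simp add: Y_def u0)
  have Ysq: "(Y z)^2 = cb s z" for z using y0(2) by (simp add: Y_def u_def power_mult_distrib)
  have cY: "isCont Y x0" using holY \<rho>1(1) by (rule isCont_holo)
  obtain \<rho>2 where \<rho>2: "\<rho>2 > 0" "\<And>z. z \<in> ball x0 \<rho>2 \<Longrightarrow> cmod (Y z - Y x0) < cmod y0 / 2"
    using cont_ball_bound[OF cY, of "cmod y0 / 2"] y0 by auto
  define \<rho> where "\<rho> = min \<rho>1 \<rho>2"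
  show ?thesis
  proof (rule that[of \<rho> Y])
    show "\<rho> > 0" using \<rho>1 \<rho>2 by (simp add: \<rho>_def)
    show "Y holomorphic_on ball x0 \<rho>" using holY by (rule holomorphic_on_subset) (auto simp: \<rho>_def)
    show "Y x0 = y0" by (rule Y0)
    show "\<And>z. z \<in> ball x0 \<rho> \<Longrightarrow> (Y z)^2 = cb s z" using Ysq by simp
    show "\<exists>r'>0. \<forall>z\<in>ball x0 r'. Some (z, Y z) \<in> ballE (curveE s) (Some (x0, y0)) r" if r: "r > 0" for r
    proof -
      obtain d where d: "d > 0" "\<And>z. z \<in> ball x0 d \<Longrightarrow> cmod (Y z - Y x0) < r"
        using cont_ball_bound[OF cY r] by auto
      show ?thesis
      proof (intro exI[of _ "min d r"] conjI ballI)
        show "min d r > 0" using d r by simp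
        fix z assume z: "z \<in> ball x0 (min d r)"
        then have "cmod (z - x0) < r" by (simp add: dist_norm norm_minus_commute)
        moreover have "cmod (Y z - y0) < r" using d(2)[of z] z Y0 by simp
        ultimately show "Some (z, Y z) \<in> ballE (curveE s) (Some (x0, y0)) r"
          by (simp add: ballE_Some curve_Some Ysq)
      qed
    qed
    show "\<exists>r>0. ballE (curveE s) (Some (x0, y0)) r \<subseteq> (\<lambda>z. Some (z, Y z)) ` ball x0 \<rho>'"
      if r': "0 < \<rho>'" "\<rho>' \<le> \<rho>" for \<rho>'
    proof (intro exI[of _ "min \<rho>' (cmod y0 / 2)"] conjI subsetI)
      show "0 < min \<rho>' (cmod y0 / 2)" using r' y0 by simp
      fix Q assume Q: "Q \<in> ballE (curveE s) (Some (x0, y0)) (min \<rho>' (cmod y0 / 2))"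
      then obtain x y where Qxy: "Q = Some (x, y)" "y^2 = cb s x" "cmod (x - x0) < min \<rho>' (cmod y0 / 2)"
        "cmod (y - y0) < min \<rho>' (cmod y0 / 2)"
        by (auto simp: ballE_Some curve_Some)
      have xb: "x \<in> ball x0 \<rho>'" using Qxy(3) by (simp add: dist_norm norm_minus_commute)
      then have xb2: "x \<in> ball x0 \<rho>2" using r' by (auto simp: \<rho>_def)
      have "(y - Y x) * (y + Y x) = 0" using Qxy(2) Ysq[of x] by (simp add: algebra_simps power2_eq_square)
      then have "y = Y x \<or> y = - Y x" by (auto simp: eq_neg_iff_add_eq_0)
      moreover have "y \<noteq> - Y x"
      proof
        assume yx: "y = - Y x"
        have a: "cmod (Y x - y0) < cmod y0 / 2" using \<rho>2(2)[OF xb2] Y0 by simp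
        have b: "cmod (- Y x - y0) < cmod y0 / 2" using Qxy(4) yx by simp
        have "2 * y0 = (y0 - Y x) + (y0 + Y x)" by simp
        then have "cmod (2 * y0) \<le> cmod (Y x - y0) + cmod (- Y x - y0)"
          by (metis norm_triangle_ineq norm_minus_commute minus_diff_eq diff_minus_eq_add add.commute)
        then show False using a b norm_ge_zero[of y0] by (simp add: norm_mult)
      qed
      ultimately have "y = Y x" by blast
      then show "Q \<in> (\<lambda>z. Some (z, Y z)) ` ball x0 \<rho>'" using Qxy(1) xb by blast
    qed
  qed
qed


lemma corr_Some:
  assumes "\<delta> > 0"
  shows "\<exists>\<delta>'>0. \<forall>w\<in>ballP (Some w0) \<delta>' - {Some w0}. \<exists>w'. 0 < cmod (w' - w0) \<and> cmod (w' - w0) < \<delta> \<and> (\<forall>u. Some u = w \<longleftrightarrow> u = w')"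
proof (intro exI[of _ \<delta>] conjI ballI assms)
  fix w assume "w \<in> ballP (Some w0) \<delta> - {Some w0}"
  then obtain a where a: "w = Some a" "cmod (a - w0) < \<delta>" "a \<noteq> w0" by (auto simp: ballP_def)
  then show "\<exists>w'. 0 < cmod (w' - w0) \<and> cmod (w' - w0) < \<delta> \<and> (\<forall>u. Some u = w \<longleftrightarrow> u = w')"
    by (intro exI[of _ a]) auto
qed

lemma corr_inv:
  assumes "\<delta> > 0"
  shows "\<exists>\<delta>'>0. \<forall>w\<in>ballP None \<delta>' - {None}. \<exists>w'. 0 < cmod (w' - 0) \<and> cmod (w' - 0) < \<delta> \<and>
            (\<forall>u. (if u = 0 then None else Some (inverse u)) = w \<longleftrightarrow> u = w')"
proof (intro exI[of _ \<delta>] conjI ballI assms)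
  fix w assume "w \<in> ballP None \<delta> - {None}"
  then obtain a where a: "w = Some a" "cmod a > 1 / \<delta>" by (auto simp: ballP_def)
  have a0: "a \<noteq> 0" using a assms by (auto simp: divide_less_0_iff)
  have ca: "cmod a > 0" using a0 by simp
  have "1 < \<delta> * cmod a" using a(2) assms by (simp add: divide_less_eq mult.commute)
  then have "1 / cmod a < \<delta>" using ca by (simp add: divide_less_eq mult.commute)
  then have "cmod (inverse a) < \<delta>" by (simp add: norm_inverse divide_inverse)
  then show "\<exists>w'. 0 < cmod (w' - 0) \<and> cmod (w' - 0) < \<delta> \<and> (\<forall>u. (if u = 0 then None else Some (inverse u)) = w \<longleftrightarrow> u = w')"
    using a0 a by (intro exI[of _ "inverse a"]) (auto simp: inverse_eq_iff_eq)
qed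

lemma ram_generic:
  assumes s: "s^2 = 7" and P: "y0^2 = cb s x0" "y0 \<noteq> 0" "TT s x0 \<noteq> 0" and w: "Qval s x0 y0 \<noteq> 1/2"
  shows "has_ram_index (curveE s) (Qpsi4 s) (Some (x0, y0)) (order x0 (Gp s ((2 * Qval s x0 y0 - 1)^2)))"
proof -
  obtain \<rho> Y where ch: "\<rho> > 0" "Y holomorphic_on ball x0 \<rho>" "Y x0 = y0"
    "\<And>z. z \<in> ball x0 \<rho> \<Longrightarrow> (Y z)^2 = cb s z"
    "\<And>r. r > 0 \<Longrightarrow> \<exists>r'>0. \<forall>z\<in>ball x0 r'. Some (z, Y z) \<in> ballE (curveE s) (Some (x0, y0)) r"
    "\<And>\<rho>'. 0 < \<rho>' \<Longrightarrow> \<rho>' \<le> \<rho> \<Longrightarrow> \<exists>r>0. ballE (curveE s) (Some (x0, y0)) r \<subseteq> (\<lambda>z. Some (z, Y z)) ` ball x0 \<rho>'"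
    apply (rule xchart[OF s P(1,2)]) by blast
  define w where "w = Qval s x0 y0"
  define c where "c = (2 * w - 1)^2"
  define G where "G = Gp s c"
  define g where "g z = Qval s z (Y z)" for z
  have w12: "2 * w - 1 \<noteq> 0"
  proof
    assume "2 * w - 1 = 0" then have "w = 1/2" by (simp add: field_simps)
    with w show False by (simp add: w_def)
  qed
  obtain d1 where d1: "d1 > 0" "\<And>z. z \<in> ball x0 d1 \<Longrightarrow> cmod (TT s z - TT s x0) < cmod (TT s x0)"
    using cont_ball_bound[OF isCont_TT[where s=s and x=x0], of "cmod (TT s x0)"] P(3) by auto
  have cY: "isCont Y x0" using isCont_holo[OF ch(2,1)] .
  have D0: "(4 * s + 2) * TT s x0 ^ 2 \<noteq> 0" using P(3) c42[OF s] by simp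
  have cg: "isCont g x0" unfolding g_def Qval_alt
    by (intro continuous_intros isCont_NN isCont_TT cY D0)
  obtain d2 where d2: "d2 > 0" "\<And>z. z \<in> ball x0 d2 \<Longrightarrow> cmod (g z - g x0) < cmod (2 * w - 1)"
    using cont_ball_bound[OF cg, of "cmod (2 * w - 1)"] w12 by auto
  define \<rho>' where "\<rho>' = min \<rho> (min d1 d2)"
  have \<rho>': "\<rho>' > 0" "\<rho>' \<le> \<rho>" "ball x0 \<rho>' \<subseteq> ball x0 \<rho>" "ball x0 \<rho>' \<subseteq> ball x0 d1" "ball x0 \<rho>' \<subseteq> ball x0 d2"
    using ch(1) d1 d2 by (auto simp: \<rho>'_def)
  have TTnz: "TT s z \<noteq> 0" if "z \<in> ball x0 \<rho>'" for z
    using d1(2)[of z] that \<rho>' by auto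
  have gw: "g x0 = w" by (simp add: g_def w_def ch(3))
  have g1nz: "g z + w - 1 \<noteq> 0" if "z \<in> ball x0 \<rho>'" for z
  proof
    assume h: "g z + w - 1 = 0"
    have "g z - g x0 = - (2 * w - 1)" using h gw by (simp add: algebra_simps)
    have zd: "z \<in> ball x0 d2" using that \<rho>'(5) by blast
    have "cmod (g z - g x0) < cmod (2 * w - 1)" using d2(2)[OF zd] .
    then show False using \<open>g z - g x0 = - (2 * w - 1)\<close> by (simp add: norm_minus_commute)
  qed
  have GQ: "poly G z = (4 * s + 29) * TT s z^4 * ((2 * g z - 1)^2 - c)" if "z \<in> ball x0 \<rho>'" for z
    unfolding G_def g_def using Gp_Q[OF s ch(4) TTnz[OF that]] that \<rho>' by auto
  have "poly G x0 = 0" using GQ[of x0] \<rho>' gw by (simp add: c_def)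
  have Gnz: "G \<noteq> 0" by (simp add: G_def Gp_nz)
  define m where "m = order x0 G"
  obtain q where q: "G = [:- x0, 1:] ^ m * q" "\<not> [:- x0, 1:] dvd q"
    using order_decomp[OF Gnz, of x0] by (auto simp: m_def)
  have q0: "poly q x0 \<noteq> 0" using q(2) by (simp add: poly_eq_0_iff_dvd)
  have m0: "m > 0" using \<open>poly G x0 = 0\<close> Gnz by (simp add: m_def order_root)
  define kc where "kc = 4 * (4 * s + 29)"
  have kc: "kc \<noteq> 0" unfolding kc_def using c429[OF s] by (simp only: mult_eq_0_iff) simp
  define k where "k z = poly q z / (kc * TT s z^4 * (g z + w - 1))" for z
  have holY: "Y holomorphic_on ball x0 \<rho>'" using holomorphic_on_subset[OF ch(2) \<rho>'(3)] .
  have Dnz: "(4 * s + 2) * TT s z ^ 2 \<noteq> 0" if "z \<in> ball x0 \<rho>'" for z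
    using TTnz[OF that] c42[OF s] by simp
  have holg: "g holomorphic_on ball x0 \<rho>'" unfolding g_def Qval_alt
    by (intro holomorphic_intros holo_NN holo_TT holY Dnz)
  have holk: "k holomorphic_on ball x0 \<rho>'" unfolding k_def
    using TTnz g1nz kc
    by (intro holomorphic_intros holo_TT holg) auto
  have k0: "k x0 \<noteq> 0" unfolding k_def using q0 kc TTnz[of x0] g1nz[of x0] \<rho>'(1) by simp
  have geq: "g z = w + (z - x0)^m * k z" if z: "z \<in> ball x0 \<rho>'" for z
  proof -
    have "poly G z = (z - x0)^m * poly q z" by (simp add: q(1) poly_mult poly_power)
    also have "poly G z = (4 * s + 29) * TT s z^4 * (4 * (g z - w) * (g z + w - 1))"
      using GQ[OF z] by (simp add: c_def power2_eq_square algebra_simps)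
    finally have "(kc * TT s z^4 * (g z + w - 1)) * (g z - w) = (z - x0)^m * poly q z"
      by (simp add: algebra_simps kc_def)
    moreover have "kc * TT s z^4 * (g z + w - 1) \<noteq> 0" using TTnz[OF z] g1nz[OF z] kc by simp
    ultimately have "g z - w = (z - x0)^m * poly q z / (kc * TT s z^4 * (g z + w - 1))"
      by (simp add: field_simps)
    then show ?thesis by (simp add: k_def algebra_simps)
  qed
  have fP: "Qpsi4 s (Some (x0, y0)) = Some w" using P(3) by (simp add: Qpsi4_Some w_def)
  show ?thesis unfolding m_def[symmetric] G_def[symmetric] c_def[symmetric] w_def[symmetric]
  proof (rule transfer[where \<phi>="\<lambda>z. Some (z, Y z)" and V=Some and g=g and k=k and \<rho>=\<rho>'])
    show "0 < \<rho>'" by fact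
    show "k holomorphic_on ball x0 \<rho>'" by fact
    show "k x0 \<noteq> 0" by fact
    show "0 < m" by fact
    show "\<And>z. z \<in> ball x0 \<rho>' \<Longrightarrow> g z = w + (z - x0) ^ m * k z" by (rule geq)
    show "inj_on (\<lambda>z. Some (z, Y z)) (ball x0 \<rho>')" by (auto simp: inj_on_def)
    show "Some (x0, Y x0) = Some (x0, y0)" by (simp add: ch(3))
    show "Qpsi4 s (Some (z, Y z)) = Some (g z)" if "z \<in> ball x0 \<rho>'" for z
      using TTnz[OF that] by (simp add: Qpsi4_Some g_def)
    show "\<exists>\<delta>'>0. \<forall>wa\<in>ballP (Qpsi4 s (Some (x0, y0))) \<delta>' - {Qpsi4 s (Some (x0, y0))}.
            \<exists>w'. 0 < cmod (w' - w) \<and> cmod (w' - w) < \<delta> \<and> (\<forall>u. Some u = wa \<longleftrightarrow> u = w')" if "\<delta> > 0" for \<delta>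
      unfolding fP by (rule corr_Some[OF that])
    show "\<exists>r'>0. \<forall>z\<in>ball x0 r'. Some (z, Y z) \<in> ballE (curveE s) (Some (x0, y0)) r" if "r > 0" for r
      by (rule ch(5)[OF that])
    show "\<exists>r>0. ballE (curveE s) (Some (x0, y0)) r \<subseteq> (\<lambda>z. Some (z, Y z)) ` ball x0 \<rho>''"
      if "0 < \<rho>''" "\<rho>'' \<le> \<rho>'" for \<rho>''
      using ch(6)[of \<rho>''] that \<rho>' by auto
  qed
qed


lemma NN_factor: "NN s z - NN s x0 = (z - x0) * (27 * z + 27 * x0 - (72 * s + 252))"
  unfolding NN_def by algebra

lemma ram_half:
  assumes s: "s^2 = 7" and P: "y0^2 = cb s x0" "y0 \<noteq> 0" "TT s x0 \<noteq> 0" and N: "NN s x0 = 0"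
  shows "has_ram_index (curveE s) (Qpsi4 s) (Some (x0, y0)) 1"
proof -
  obtain \<rho> Y where ch: "\<rho> > 0" "Y holomorphic_on ball x0 \<rho>" "Y x0 = y0"
    "\<And>z. z \<in> ball x0 \<rho> \<Longrightarrow> (Y z)^2 = cb s z"
    "\<And>r. r > 0 \<Longrightarrow> \<exists>r'>0. \<forall>z\<in>ball x0 r'. Some (z, Y z) \<in> ballE (curveE s) (Some (x0, y0)) r"
    "\<And>\<rho>'. 0 < \<rho>' \<Longrightarrow> \<rho>' \<le> \<rho> \<Longrightarrow> \<exists>r>0. ballE (curveE s) (Some (x0, y0)) r \<subseteq> (\<lambda>z. Some (z, Y z)) ` ball x0 \<rho>'"
    apply (rule xchart[OF s P(1,2)]) by blast
  define g where "g z = Qval s z (Y z)" for z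
  obtain d1 where d1: "d1 > 0" "\<And>z. z \<in> ball x0 d1 \<Longrightarrow> cmod (TT s z - TT s x0) < cmod (TT s x0)"
    using cont_ball_bound[OF isCont_TT[where s=s and x=x0], of "cmod (TT s x0)"] P(3) by auto
  define \<rho>' where "\<rho>' = min \<rho> d1"
  have \<rho>': "\<rho>' > 0" "\<rho>' \<le> \<rho>" "ball x0 \<rho>' \<subseteq> ball x0 \<rho>" "ball x0 \<rho>' \<subseteq> ball x0 d1"
    using ch(1) d1 by (auto simp: \<rho>'_def)
  have TTnz: "TT s z \<noteq> 0" if "z \<in> ball x0 \<rho>'" for z
  proof
    assume "TT s z = 0"
    moreover have "z \<in> ball x0 d1" using that \<rho>'(4) by blast
    ultimately show False using d1(2)[of z] by simp
  qed
  have holY: "Y holomorphic_on ball x0 \<rho>'" using holomorphic_on_subset[OF ch(2) \<rho>'(3)] .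
  define k where "k z = (27 * z + 27 * x0 - (72 * s + 252)) * Y z / ((4 * s + 2) * TT s z ^ 2)" for z
  have Dnz: "(4 * s + 2) * TT s z ^ 2 \<noteq> 0" if "z \<in> ball x0 \<rho>'" for z
    using TTnz[OF that] c42[OF s] by simp
  have holk: "k holomorphic_on ball x0 \<rho>'" unfolding k_def
    by (intro holomorphic_intros holo_TT holY Dnz)
  have Nd: "NNd s x0 \<noteq> 0" using B3[OF s N] by blast
  have e: "27 * x0 + 27 * x0 - (72 * s + 252) = NNd s x0" by (simp add: NNd_def algebra_simps)
  have k0: "k x0 \<noteq> 0" unfolding k_def e ch(3) using Nd P(2) Dnz[of x0] \<rho>'(1) by simp
  have geq: "g z = 1/2 + (z - x0)^1 * k z" if z: "z \<in> ball x0 \<rho>'" for z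
  proof -
    have "NN s z = (z - x0) * (27 * z + 27 * x0 - (72 * s + 252))" using NN_factor[of s z x0] N by simp
    then show ?thesis by (simp add: g_def k_def Qval_alt)
  qed
  have fP: "Qpsi4 s (Some (x0, y0)) = Some (1/2)" using P(3) N by (simp add: Qpsi4_Some Qval_alt)
  show ?thesis
  proof (rule transfer[where \<phi>="\<lambda>z. Some (z, Y z)" and V=Some and g=g and k=k and \<rho>=\<rho>'])
    show "0 < \<rho>'" by fact
    show "k holomorphic_on ball x0 \<rho>'" by fact
    show "k x0 \<noteq> 0" by fact
    show "(0::nat) < 1" by simp
    show "\<And>z. z \<in> ball x0 \<rho>' \<Longrightarrow> g z = 1/2 + (z - x0) ^ 1 * k z" by (rule geq)
    show "inj_on (\<lambda>z. Some (z, Y z)) (ball x0 \<rho>')" by (auto simp: inj_on_def)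
    show "Some (x0, Y x0) = Some (x0, y0)" by (simp add: ch(3))
    show "Qpsi4 s (Some (z, Y z)) = Some (g z)" if "z \<in> ball x0 \<rho>'" for z
      using TTnz[OF that] by (simp add: Qpsi4_Some g_def)
    show "\<exists>\<delta>'>0. \<forall>wa\<in>ballP (Qpsi4 s (Some (x0, y0))) \<delta>' - {Qpsi4 s (Some (x0, y0))}.
            \<exists>w'. 0 < cmod (w' - 1/2) \<and> cmod (w' - 1/2) < \<delta> \<and> (\<forall>u. Some u = wa \<longleftrightarrow> u = w')" if "\<delta> > 0" for \<delta>
      unfolding fP by (rule corr_Some[OF that])
    show "\<exists>r'>0. \<forall>z\<in>ball x0 r'. Some (z, Y z) \<in> ballE (curveE s) (Some (x0, y0)) r" if "r > 0" for r
      by (rule ch(5)[OF that])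
    show "\<exists>r>0. ballE (curveE s) (Some (x0, y0)) r \<subseteq> (\<lambda>z. Some (z, Y z)) ` ball x0 \<rho>''"
      if "0 < \<rho>''" "\<rho>'' \<le> \<rho>'" for \<rho>''
      using ch(6)[of \<rho>''] that \<rho>' by auto
  qed
qed

lemma ram_pole:
  assumes s: "s^2 = 7" and P: "y0^2 = cb s x0" "TT s x0 = 0"
  shows "has_ram_index (curveE s) (Qpsi4 s) (Some (x0, y0)) 2"
proof -
  have x0: "7 * x0 = 32 + 10 * s" using P(2) by (simp add: TT_def algebra_simps)
  have cb0: "cb s x0 \<noteq> 0" using cb_xinf[OF s x0] .
  have N0: "NN s x0 \<noteq> 0" using NN_xinf[OF s x0] .
  have y0: "y0 \<noteq> 0" using P(1) cb0 by auto
  obtain \<rho> Y where ch: "\<rho> > 0" "Y holomorphic_on ball x0 \<rho>" "Y x0 = y0"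
    "\<And>z. z \<in> ball x0 \<rho> \<Longrightarrow> (Y z)^2 = cb s z"
    "\<And>r. r > 0 \<Longrightarrow> \<exists>r'>0. \<forall>z\<in>ball x0 r'. Some (z, Y z) \<in> ballE (curveE s) (Some (x0, y0)) r"
    "\<And>\<rho>'. 0 < \<rho>' \<Longrightarrow> \<rho>' \<le> \<rho> \<Longrightarrow> \<exists>r>0. ballE (curveE s) (Some (x0, y0)) r \<subseteq> (\<lambda>z. Some (z, Y z)) ` ball x0 \<rho>'"
    apply (rule xchart[OF s P(1) y0]) by blast
  define den where "den z = (4 * s + 2) * TT s z ^ 2 + 2 * NN s z * Y z" for z
  have den0: "den x0 = 2 * NN s x0 * y0" by (simp add: den_def P(2) ch(3))
  have cY: "isCont Y x0" using isCont_holo[OF ch(2,1)] .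
  have cden: "isCont den x0" unfolding den_def by (intro continuous_intros isCont_NN isCont_TT cY)
  obtain d1 where d1: "d1 > 0" "\<And>z. z \<in> ball x0 d1 \<Longrightarrow> cmod (den z - den x0) < cmod (den x0)"
    using cont_ball_bound[OF cden, of "cmod (den x0)"] den0 N0 y0 by auto
  define \<rho>' where "\<rho>' = min \<rho> d1"
  have \<rho>': "\<rho>' > 0" "\<rho>' \<le> \<rho>" "ball x0 \<rho>' \<subseteq> ball x0 \<rho>" "ball x0 \<rho>' \<subseteq> ball x0 d1"
    using ch(1) d1 by (auto simp: \<rho>'_def)
  have dennz: "den z \<noteq> 0" if "z \<in> ball x0 \<rho>'" for z
  proof
    assume "den z = 0"
    moreover have "z \<in> ball x0 d1" using that \<rho>'(4) by blast
    ultimately show False using d1(2)[of z] by simp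
  qed
  have holY: "Y holomorphic_on ball x0 \<rho>'" using holomorphic_on_subset[OF ch(2) \<rho>'(3)] .
  define kc where "kc = 2 * (4 * s + 2) * 49"
  have kc: "kc \<noteq> 0" unfolding kc_def using c42[OF s] by (simp only: mult_eq_0_iff) simp
  define g where "g z = 2 * (4 * s + 2) * TT s z ^ 2 / den z" for z
  define k where "k z = kc / den z" for z
  have TTz: "TT s z = 7 * (z - x0)" for z using P(2) by (simp add: TT_def algebra_simps)
  have holk: "k holomorphic_on ball x0 \<rho>'" unfolding k_def den_def
    using dennz unfolding den_def by (intro holomorphic_intros holo_TT holo_NN holY) auto
  have k0: "k x0 \<noteq> 0" unfolding k_def using kc dennz[of x0] \<rho>'(1) by simp
  have geq: "g z = 0 + (z - x0)^2 * k z" for z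
  proof -
    have "2 * (4 * s + 2) * TT s z ^ 2 = (z - x0)^2 * kc" unfolding TTz kc_def by algebra
    then show ?thesis by (simp add: g_def k_def)
  qed
  have fP: "Qpsi4 s (Some (x0, y0)) = None" using P(2) by (simp add: Qpsi4_Some)
  have fV: "Qpsi4 s (Some (z, Y z)) = (if g z = 0 then None else Some (inverse (g z)))"
    if z: "z \<in> ball x0 \<rho>'" for z
  proof (cases "z = x0")
    case True then show ?thesis using P(2) by (simp add: Qpsi4_Some g_def)
  next
    case False
    then have T: "TT s z \<noteq> 0" using TTz by simp
    have D: "(4 * s + 2) * TT s z ^ 2 \<noteq> 0" using T c42[OF s] by simp
    have Nz: "2 * (4 * s + 2) * TT s z ^ 2 \<noteq> 0" using T c42[OF s] by (simp only: mult_eq_0_iff power_eq_0_iff) simp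
    have gnz: "g z \<noteq> 0" unfolding g_def using Nz dennz[OF z] by (simp only: divide_eq_0_iff) simp
    have "Qval s z (Y z) = den z / (2 * ((4 * s + 2) * TT s z ^ 2))"
      unfolding Qval_alt den_def using D by (simp add: field_simps)
    also have "\<dots> = inverse (g z)" by (simp add: g_def field_simps)
    finally show ?thesis using T gnz by (simp add: Qpsi4_Some)
  qed
  show ?thesis
  proof (rule transfer[where \<phi>="\<lambda>z. Some (z, Y z)" and V="\<lambda>u. if u = 0 then None else Some (inverse u)" and g=g and k=k and \<rho>=\<rho>'])
    show "0 < \<rho>'" by fact
    show "k holomorphic_on ball x0 \<rho>'" by fact
    show "k x0 \<noteq> 0" by fact
    show "(0::nat) < 2" by simp
    show "\<And>z. z \<in> ball x0 \<rho>' \<Longrightarrow> g z = 0 + (z - x0) ^ 2 * k z" by (rule geq)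
    show "inj_on (\<lambda>z. Some (z, Y z)) (ball x0 \<rho>')" by (auto simp: inj_on_def)
    show "Some (x0, Y x0) = Some (x0, y0)" by (simp add: ch(3))
    show "\<And>z. z \<in> ball x0 \<rho>' \<Longrightarrow> Qpsi4 s (Some (z, Y z)) = (if g z = 0 then None else Some (inverse (g z)))"
      by (rule fV)
    show "\<exists>\<delta>'>0. \<forall>wa\<in>ballP (Qpsi4 s (Some (x0, y0))) \<delta>' - {Qpsi4 s (Some (x0, y0))}.
            \<exists>w'. 0 < cmod (w' - 0) \<and> cmod (w' - 0) < \<delta> \<and> (\<forall>u. (if u = 0 then None else Some (inverse u)) = wa \<longleftrightarrow> u = w')" if "\<delta> > 0" for \<delta>
      unfolding fP by (rule corr_inv[OF that])
    show "\<exists>r'>0. \<forall>z\<in>ball x0 r'. Some (z, Y z) \<in> ballE (curveE s) (Some (x0, y0)) r" if "r > 0" for r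
      by (rule ch(5)[OF that])
    show "\<exists>r>0. ballE (curveE s) (Some (x0, y0)) r \<subseteq> (\<lambda>z. Some (z, Y z)) ` ball x0 \<rho>''"
      if "0 < \<rho>''" "\<rho>'' \<le> \<rho>'" for \<rho>''
      using ch(6)[of \<rho>''] that \<rho>' by auto
  qed
qed


lemma holo_NN': "f holomorphic_on A \<Longrightarrow> (\<lambda>z. NN s (f z)) holomorphic_on A"
  unfolding NN_def by (intro holomorphic_intros)
lemma holo_TT': "f holomorphic_on A \<Longrightarrow> (\<lambda>z. TT s (f z)) holomorphic_on A"
  unfolding TT_def by (intro holomorphic_intros)

lemma cb_deriv: "(cb s has_field_derivative cbd s x) (at x)"
proof -
  have "((\<lambda>x. x * (x^2 - (4 * s + 7) * x + 16 * s + 35)) has_field_derivative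
          (1 * (x^2 - (4 * s + 7) * x + 16 * s + 35) + x * (2 * x - (4 * s + 7)))) (at x)"
    by (auto intro!: derivative_eq_intros simp: power2_eq_square)
  moreover have "1 * (x^2 - (4 * s + 7) * x + 16 * s + 35) + x * (2 * x - (4 * s + 7)) = cbd s x"
    unfolding cbd_def by algebra
  ultimately show ?thesis unfolding cb_def[abs_def] by simp
qed

lemma ram_branch:
  assumes s: "s^2 = 7" and c0: "cb s x0 = 0"
  shows "has_ram_index (curveE s) (Qpsi4 s) (Some (x0, 0)) 1"
proof -
  have cd: "cbd s x0 \<noteq> 0" using B2[OF s c0] by blast
  have TT0: "TT s x0 \<noteq> 0"
  proof
    assume "TT s x0 = 0" then have "7 * x0 = 32 + 10 * s" by (simp add: TT_def algebra_simps)
    from cb_xinf[OF s this] c0 show False by simp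
  qed
  have N0: "NN s x0 \<noteq> 0" using B1[OF s _ c0] by blast
  have dcb: "deriv (cb s) x0 \<noteq> 0" using DERIV_imp_deriv[OF cb_deriv] cd by simp
  obtain r1 where r1: "r1 > 0" "inj_on (cb s) (ball x0 r1)"
    using has_complex_derivative_locally_injective[OF holo_cb[of s UNIV] _ open_UNIV dcb] by blast
  obtain d1 where d1: "d1 > 0" "\<And>z. z \<in> ball x0 d1 \<Longrightarrow> cmod (TT s z - TT s x0) < cmod (TT s x0)"
    using cont_ball_bound[OF isCont_TT[where s=s and x=x0], of "cmod (TT s x0)"] TT0 by auto
  define rS where "rS = min r1 d1"
  define S where "S = ball x0 rS"
  have rS: "rS > 0" using r1 d1 by (simp add: rS_def)
  have x0S: "x0 \<in> S" using rS by (simp add: S_def)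
  have injS: "inj_on (cb s) S" using r1(2) by (rule inj_on_subset) (auto simp: S_def rS_def)
  have TTS: "TT s z \<noteq> 0" if "z \<in> S" for z
  proof
    assume "TT s z = 0"
    moreover have "z \<in> ball x0 d1" using that by (auto simp: S_def rS_def)
    ultimately show False using d1(2)[of z] by simp
  qed
  obtain X where X: "X holomorphic_on (cb s ` S)" "\<And>z. z \<in> S \<Longrightarrow> X (cb s z) = z"
    using holomorphic_has_inverse[OF holo_cb[of s S] _ injS] by (metis S_def open_ball)
  have opS: "open (cb s ` S)" using open_mapping_thm3[OF holo_cb[of s S] _ injS] by (simp add: S_def)
  have "0 \<in> cb s ` S" using x0S c0 by (metis imageI)
  then obtain \<epsilon> where \<epsilon>: "\<epsilon> > 0" "ball 0 \<epsilon> \<subseteq> cb s ` S" using opS by (meson open_contains_ball)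
  define \<rho> where "\<rho> = min 1 \<epsilon>"
  have \<rho>: "\<rho> > 0" using \<epsilon> by (simp add: \<rho>_def)
  have sqin: "z^2 \<in> cb s ` S" if "z \<in> ball 0 \<rho>" for z
  proof -
    have z1: "cmod z < 1" "cmod z < \<epsilon>" using that by (auto simp: \<rho>_def)
    have "cmod (z^2) = cmod z * cmod z" by (simp add: power2_eq_square norm_mult)
    also have "\<dots> \<le> cmod z" using z1 by (simp add: mult_left_le_one_le)
    finally have "cmod (z^2) < \<epsilon>" using z1 by simp
    then show ?thesis using \<epsilon>(2) by auto
  qed
  define Xs where "Xs z = X (z^2)" for z
  have XsS: "Xs z \<in> S" "cb s (Xs z) = z^2" if zb: "z \<in> ball 0 \<rho>" for z
  proof -
    obtain t where t: "t \<in> S" "z^2 = cb s t" using sqin[OF zb] by blast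
    then show "Xs z \<in> S" "cb s (Xs z) = z^2" by (simp_all add: Xs_def X(2))
  qed
  have Xs0: "Xs 0 = x0" using X(2)[OF x0S] c0 by (simp add: Xs_def)
  have holXs: "Xs holomorphic_on ball 0 \<rho>"
  proof -
    have "(X \<circ> (\<lambda>z. z^2)) holomorphic_on ball 0 \<rho>"
      by (rule holomorphic_on_compose_gen[OF _ X(1)]) (auto intro: holomorphic_intros sqin)
    then show ?thesis by (simp add: Xs_def[abs_def] o_def)
  qed
  define k where "k z = NN s (Xs z) / ((4 * s + 2) * TT s (Xs z) ^ 2)" for z
  define g where "g z = Qval s (Xs z) z" for z
  have Dnz: "(4 * s + 2) * TT s (Xs z) ^ 2 \<noteq> 0" if "z \<in> ball 0 \<rho>" for z
    using TTS[OF XsS(1)[OF that]] c42[OF s] by simp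
  have holk: "k holomorphic_on ball 0 \<rho>" unfolding k_def
    by (intro holomorphic_intros holo_NN' holo_TT' holXs Dnz)
  have k0: "k 0 \<noteq> 0" unfolding k_def Xs0 using N0 TT0 c42[OF s] by simp
  have geq: "g z = 1/2 + (z - 0)^1 * k z" for z by (simp add: g_def k_def Qval_alt)
  have fP: "Qpsi4 s (Some (x0, 0)) = Some (1/2)" using TT0 by (simp add: Qpsi4_Some Qval_alt)
  have cXs: "isCont Xs 0" using isCont_holo[OF holXs \<rho>] .
  show ?thesis
  proof (rule transfer[where \<phi>="\<lambda>z. Some (Xs z, z)" and V=Some and g=g and k=k and \<rho>=\<rho>])
    show "0 < \<rho>" by fact
    show "k holomorphic_on ball 0 \<rho>" by fact
    show "k 0 \<noteq> 0" by fact
    show "(0::nat) < 1" by simp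
    show "\<And>z. z \<in> ball 0 \<rho> \<Longrightarrow> g z = 1/2 + (z - 0) ^ 1 * k z" by (rule geq)
    show "inj_on (\<lambda>z. Some (Xs z, z)) (ball 0 \<rho>)" by (auto simp: inj_on_def)
    show "Some (Xs 0, 0) = Some (x0, 0)" by (simp add: Xs0)
    show "Qpsi4 s (Some (Xs z, z)) = Some (g z)" if "z \<in> ball 0 \<rho>" for z
      using TTS[OF XsS(1)[OF that]] by (simp add: Qpsi4_Some g_def)
    show "\<exists>\<delta>'>0. \<forall>wa\<in>ballP (Qpsi4 s (Some (x0, 0))) \<delta>' - {Qpsi4 s (Some (x0, 0))}.
            \<exists>w'. 0 < cmod (w' - 1/2) \<and> cmod (w' - 1/2) < \<delta> \<and> (\<forall>u. Some u = wa \<longleftrightarrow> u = w')" if "\<delta> > 0" for \<delta>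
      unfolding fP by (rule corr_Some[OF that])
    show "\<exists>r'>0. \<forall>z\<in>ball 0 r'. Some (Xs z, z) \<in> ballE (curveE s) (Some (x0, 0)) r" if r: "r > 0" for r
    proof -
      obtain d where d: "d > 0" "\<And>z. z \<in> ball 0 d \<Longrightarrow> cmod (Xs z - Xs 0) < r"
        using cont_ball_bound[OF cXs r] by auto
      show ?thesis
      proof (intro exI[of _ "min d (min r \<rho>)"] conjI ballI)
        show "min d (min r \<rho>) > 0" using d r \<rho> by simp
        fix z :: complex assume z: "z \<in> ball 0 (min d (min r \<rho>))"
        then have zr: "z \<in> ball 0 \<rho>" "z \<in> ball 0 d" "cmod z < r" by auto
        show "Some (Xs z, z) \<in> ballE (curveE s) (Some (x0, 0)) r"
          using d(2)[OF zr(2)] zr(3) XsS(2)[OF zr(1)] Xs0 by (simp add: ballE_Some curve_Some)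
      qed
    qed
    show "\<exists>r>0. ballE (curveE s) (Some (x0, 0)) r \<subseteq> (\<lambda>z. Some (Xs z, z)) ` ball 0 \<rho>''"
      if r'': "0 < \<rho>''" "\<rho>'' \<le> \<rho>" for \<rho>''
    proof (intro exI[of _ "min \<rho>'' rS"] conjI subsetI)
      show "0 < min \<rho>'' rS" using r'' rS by simp
      fix Q assume Q: "Q \<in> ballE (curveE s) (Some (x0, 0)) (min \<rho>'' rS)"
      then obtain x y where Qxy: "Q = Some (x, y)" "y^2 = cb s x" "cmod (x - x0) < min \<rho>'' rS"
        "cmod (y - 0) < min \<rho>'' rS"
        by (auto simp: ballE_Some curve_Some)
      have xS: "x \<in> S" using Qxy(3) by (simp add: S_def dist_norm norm_minus_commute)
      have yb: "y \<in> ball 0 \<rho>''" using Qxy(4) by simp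
      have "Xs y = x" using X(2)[OF xS] Qxy(2) by (simp add: Xs_def)
      then show "Q \<in> (\<lambda>z. Some (Xs z, z)) ` ball 0 \<rho>''" using Qxy(1) yb by force
    qed
  qed
qed


lemma sq_cases: fixes y a :: complex shows "y^2 = a^2 \<Longrightarrow> y = a \<or> y = - a"
proof -
  assume "y^2 = a^2"
  then have "(y - a) * (y + a) = 0" by (simp add: algebra_simps power2_eq_square)
  then show ?thesis by (auto simp: eq_neg_iff_add_eq_0)
qed

lemma ram_inf:
  assumes s: "s^2 = 7"
  shows "has_ram_index (curveE s) (Qpsi4 s) None 3"
proof -
  define u where "u v = 1 - (4 * s + 7) * v^2 + (16 * s + 35) * v^4" for v :: complex
  define Sq where "Sq v = csqrt (u v)" for v
  define Nt where "Nt v = 27 - (72 * s + 252) * v^2 + (344 * s + 1036) * v^4" for v :: complex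
  define Tt where "Tt v = 7 - (10 * s + 32) * v^2" for v :: complex
  define Dt where "Dt v = (4 * s + 2) * Tt v ^ 2" for v
  define den where "den v = Dt v * v^3 + 2 * Nt v * Sq v" for v
  define g where "g v = 2 * Dt v * v^3 / den v" for v
  define k where "k v = 2 * Dt v / den v" for v
  define \<phi> where "\<phi> v = (if v = 0 then None else Some (1 / v^2, Sq v / v^3))" for v
  have cu: "isCont u 0" unfolding u_def by (intro continuous_intros)
  have u0: "u 0 = 1" by (simp add: u_def)
  obtain d1 where d1: "d1 > 0" "\<And>v. v \<in> ball 0 d1 \<Longrightarrow> cmod (u v - u 0) < 1"
    using cont_ball_bound[OF cu, of 1] by auto
  have unr: "u v \<notin> \<real>\<^sub>\<le>\<^sub>0" if "v \<in> ball 0 d1" for v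
    using near1_notnonpos d1(2)[OF that] u0 by simp
  have holu: "u holomorphic_on A" for A unfolding u_def[abs_def] by (intro holomorphic_intros)
  have holSq: "Sq holomorphic_on ball 0 d1" unfolding Sq_def
    using unr by (intro holomorphic_intros holu) auto
  have Sqnz: "Sq v \<noteq> 0" if "v \<in> ball 0 d1" for v
    using unr[OF that] by (auto simp: Sq_def)
  have Sq0: "Sq 0 = 1" by (simp add: Sq_def u0)
  have Sqsq: "(Sq v)^2 = u v" for v by (simp add: Sq_def)
  have ctt: "isCont Tt 0" unfolding Tt_def by (intro continuous_intros)
  obtain d2 where d2: "d2 > 0" "\<And>v. v \<in> ball 0 d2 \<Longrightarrow> cmod (Tt v - Tt 0) < cmod (Tt 0)"
    using cont_ball_bound[OF ctt, of "cmod (Tt 0)"] by (auto simp: Tt_def)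
  have cSq: "isCont Sq 0" using isCont_holo[OF holSq d1(1)] .
  have cden: "isCont den 0" unfolding den_def Dt_def Tt_def Nt_def
    by (intro continuous_intros cSq)
  have den0: "den 0 = 54" by (simp add: den_def Nt_def Sq0)
  obtain d3 where d3: "d3 > 0" "\<And>v. v \<in> ball 0 d3 \<Longrightarrow> cmod (den v - den 0) < cmod (den 0)"
    using cont_ball_bound[OF cden, of "cmod (den 0)"] den0 by auto
  define \<rho> where "\<rho> = min 1 (min d1 (min d2 d3))"
  have \<rho>: "\<rho> > 0" using d1 d2 d3 by (simp add: \<rho>_def)
  have inb: "v \<in> ball 0 d1" "v \<in> ball 0 d2" "v \<in> ball 0 d3" "cmod v < 1" if "v \<in> ball 0 \<rho>" for v
    using that by (auto simp: \<rho>_def)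
  have Ttnz: "Tt v \<noteq> 0" if "v \<in> ball 0 \<rho>" for v
  proof
    assume "Tt v = 0" then show False using d2(2)[OF inb(2)[OF that]] by simp
  qed
  have dennz: "den v \<noteq> 0" if "v \<in> ball 0 \<rho>" for v
  proof
    assume "den v = 0" then show False using d3(2)[OF inb(3)[OF that]] by simp
  qed
  have Dtnz: "Dt v \<noteq> 0" if "v \<in> ball 0 \<rho>" for v
    using Ttnz[OF that] c42[OF s] by (simp add: Dt_def)
  have holSq': "Sq holomorphic_on ball 0 \<rho>" using holSq by (rule holomorphic_on_subset) (auto simp: \<rho>_def)
  have holk: "k holomorphic_on ball 0 \<rho>" unfolding k_def den_def Dt_def Tt_def Nt_def
    using dennz unfolding den_def Dt_def Tt_def Nt_def by (intro holomorphic_intros holSq') auto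
  have k0: "k 0 \<noteq> 0" unfolding k_def using Dtnz[of 0] dennz[of 0] \<rho> by simp
  have geq: "g v = 0 + (v - 0)^3 * k v" for v by (simp add: g_def k_def)
  have I1: "(Sq v / v^3)^2 = cb s (1 / v^2)" if "v \<noteq> 0" for v
  proof -
    have "(Sq v / v^3)^2 = u v / v^6" by (simp add: power_divide Sqsq flip: power_mult)
    also have "\<dots> = cb s (1 / v^2)" unfolding u_def cb_def using that by (simp add: field_simps)
    finally show ?thesis .
  qed
  have I2: "TT s (1 / v^2) = Tt v / v^2" if "v \<noteq> 0" for v
    unfolding TT_def Tt_def using that by (simp add: field_simps)
  have I3: "NN s (1 / v^2) = Nt v / v^4" if "v \<noteq> 0" for v
    unfolding NN_def Nt_def using that by (simp add: field_simps)
  have I4: "Qval s (1 / v^2) (Sq v / v^3) = inverse (g v)" if v: "v \<noteq> 0" "v \<in> ball 0 \<rho>" for v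
  proof -
    have T: "Tt v \<noteq> 0" using Ttnz[OF v(2)] .
    have D: "Dt v \<noteq> 0" using Dtnz[OF v(2)] .
    have "NN s (1 / v^2) / ((4 * s + 2) * TT s (1 / v^2) ^ 2) = Nt v / Dt v"
      unfolding I2[OF v(1)] I3[OF v(1)] Dt_def using v(1) T c42[OF s] by (simp add: field_simps)
    then have "Qval s (1 / v^2) (Sq v / v^3) = 1/2 + Nt v / Dt v * (Sq v / v^3)"
      by (simp add: Qval_alt)
    also have "\<dots> = den v / (2 * Dt v * v^3)" unfolding den_def using D v(1) by (simp add: field_simps)
    also have "\<dots> = inverse (g v)" by (simp add: g_def)
    finally show ?thesis .
  qed
  have fV: "Qpsi4 s (\<phi> v) = (if g v = 0 then None else Some (inverse (g v)))" if v: "v \<in> ball 0 \<rho>" for v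
  proof (cases "v = 0")
    case True then show ?thesis by (simp add: \<phi>_def g_def Qpsi4_None)
  next
    case False
    have gnz: "g v \<noteq> 0" unfolding g_def using False Dtnz[OF v] dennz[OF v] by simp
    have "TT s (1 / v^2) \<noteq> 0" unfolding I2[OF False] using Ttnz[OF v] False by simp
    then show ?thesis using gnz I4[OF False v] False by (simp add: \<phi>_def Qpsi4_Some)
  qed
  have Sq_even: "Sq (- v) = Sq v" for v by (simp add: Sq_def u_def)
  show ?thesis
  proof (rule transfer[where \<phi>=\<phi> and V="\<lambda>u. if u = 0 then None else Some (inverse u)" and g=g and k=k and \<rho>=\<rho>])
    show "0 < \<rho>" by fact
    show "k holomorphic_on ball 0 \<rho>" by fact
    show "k 0 \<noteq> 0" by fact
    show "(0::nat) < 3" by simp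
    show "\<And>v. v \<in> ball 0 \<rho> \<Longrightarrow> g v = 0 + (v - 0) ^ 3 * k v" by (rule geq)
    show "inj_on \<phi> (ball 0 \<rho>)"
    proof (rule inj_onI)
      fix v1 v2 assume v: "v1 \<in> ball 0 \<rho>" "v2 \<in> ball 0 \<rho>" "\<phi> v1 = \<phi> v2"
      show "v1 = v2"
      proof (cases "v1 = 0 \<or> v2 = 0")
        case True then show ?thesis using v(3) by (auto simp: \<phi>_def split: if_splits)
      next
        case False
        then have e: "1 / v1^2 = 1 / v2^2" "Sq v1 / v1^3 = Sq v2 / v2^3" using v(3) by (auto simp: \<phi>_def)
        have "v1^2 = v2^2" using e(1) False by (simp add: field_simps)
        then have "v2 = v1 \<or> v2 = - v1" by (metis sq_cases)
        moreover have "v2 \<noteq> - v1"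
        proof
          assume "v2 = - v1"
          then have "Sq v1 / v1^3 = - (Sq v1 / v1^3)" using e(2) Sq_even by simp
          then have "Sq v1 = 0" using False by (simp add: eq_neg_iff_add_eq_0[symmetric] field_simps)
          then show False using Sqnz inb(1)[OF v(1)] by auto
        qed
        ultimately show ?thesis by auto
      qed
    qed
    show "\<phi> 0 = None" by (simp add: \<phi>_def)
    show "\<And>v. v \<in> ball 0 \<rho> \<Longrightarrow> Qpsi4 s (\<phi> v) = (if g v = 0 then None else Some (inverse (g v)))"
      by (rule fV)
    show "\<exists>\<delta>'>0. \<forall>wa\<in>ballP (Qpsi4 s None) \<delta>' - {Qpsi4 s None}.
            \<exists>w'. 0 < cmod (w' - 0) \<and> cmod (w' - 0) < \<delta> \<and> (\<forall>u. (if u = 0 then None else Some (inverse u)) = wa \<longleftrightarrow> u = w')" if "\<delta> > 0" for \<delta>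
      unfolding Qpsi4_None by (rule corr_inv[OF that])
    show "\<exists>r'>0. \<forall>v\<in>ball 0 r'. \<phi> v \<in> ballE (curveE s) None r" if r: "r > 0" for r
    proof (intro exI[of _ "min (min 1 r) \<rho>"] conjI ballI)
      show "min (min 1 r) \<rho> > 0" using r \<rho> by simp
      fix v :: complex assume v: "v \<in> ball 0 (min (min 1 r) \<rho>)"
      show "\<phi> v \<in> ballE (curveE s) None r"
      proof (cases "v = 0")
        case True then show ?thesis by (simp add: \<phi>_def ballE_None curve_None)
      next
        case False
        have v1: "cmod v < 1" "cmod v < r" using v by auto
        have "cmod v * cmod v \<le> cmod v" using v1 by (simp add: mult_left_le_one_le)
        then have lt: "cmod v ^ 2 < r" using v1 by (simp add: power2_eq_square)
        have "1 / r < 1 / cmod v ^ 2" using lt False by (simp add: frac_less2)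
        then have "cmod (1 / v^2) > 1 / r" by (simp add: norm_divide norm_power)
        then show ?thesis using False I1[OF False]
          by (simp add: \<phi>_def ballE_None curve_Some)
      qed
    qed
    show "\<exists>r>0. ballE (curveE s) None r \<subseteq> \<phi> ` ball 0 \<rho>''" if r'': "0 < \<rho>''" "\<rho>'' \<le> \<rho>" for \<rho>''
    proof (intro exI[of _ "\<rho>''^2"] conjI subsetI)
      show "0 < \<rho>''^2" using r'' by simp
      fix Q assume Q: "Q \<in> ballE (curveE s) None (\<rho>''^2)"
      show "Q \<in> \<phi> ` ball 0 \<rho>''"
      proof (cases Q)
        case None
        have "\<phi> 0 = None" by (simp add: \<phi>_def)
        moreover have "(0::complex) \<in> ball 0 \<rho>''" using r'' by simp
        ultimately show ?thesis using None by (metis image_eqI)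
      next
        case (Some p)
        then obtain x y where Qxy: "Q = Some (x, y)" "y^2 = cb s x" "cmod x > 1 / \<rho>''^2"
          using Q by (cases p) (auto simp: ballE_None curve_Some)
        have x0: "x \<noteq> 0" using Qxy(3) r'' by auto
        define v where "v = csqrt (inverse x)"
        have vsq: "v^2 = inverse x" by (simp add: v_def)
        have v0: "v \<noteq> 0" using x0 vsq by auto
        have "cmod v ^ 2 = 1 / cmod x" using vsq by (metis norm_inverse norm_power inverse_eq_divide)
        also have "\<dots> < \<rho>''^2" using Qxy(3) r'' x0 by (simp add: divide_less_eq mult.commute)
        finally have vr: "cmod v < \<rho>''" using r'' by (meson power_less_imp_less_base less_imp_le)
        have vb: "v \<in> ball 0 \<rho>''" "- v \<in> ball 0 \<rho>''" using vr by auto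
        have x: "1 / v^2 = x" using vsq x0 by (simp add: inverse_eq_divide)
        have "y^2 = (Sq v / v^3)^2" using Qxy(2) I1[OF v0] x by simp
        then have "y = Sq v / v^3 \<or> y = - (Sq v / v^3)" by (rule sq_cases)
        then show ?thesis
        proof
          assume "y = Sq v / v^3"
          then have "\<phi> v = Q" using Qxy(1) x v0 by (simp add: \<phi>_def)
          then show ?thesis using vb(1) by force
        next
          assume "y = - (Sq v / v^3)"
          then have "\<phi> (- v) = Q" using Qxy(1) x v0 Sq_even by (simp add: \<phi>_def)
          then show ?thesis using vb(2) by force
        qed
      qed
    qed
  qed
qed


lemma sum_order_degree:
  fixes p :: "complex poly" assumes "p \<noteq> 0"
  shows "(\<Sum>x\<in>{x. poly p x = 0}. order x p) = degree p"
proof -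
  have "degree p = size (proots p)" by (simp add: size_proots_complex)
  also have "\<dots> = (\<Sum>x\<in>set_mset (proots p). count (proots p) x)" by (simp add: size_multiset_overloaded_eq)
  also have "\<dots> = (\<Sum>x\<in>{x. poly p x = 0}. order x p)" using assms by simp
  finally show ?thesis by simp
qed

lemma order_factor:
  fixes p q :: "complex poly"
  assumes "\<And>z. poly p z = (z - x0)^n * poly q z" "poly q x0 \<noteq> 0"
  shows "order x0 p = n"
proof -
  have "poly p = poly ([:-x0, 1:]^n * q)" by (rule ext) (simp add: assms(1) poly_power poly_mult)
  then have p: "p = [:-x0, 1:]^n * q" by (simp add: poly_eq_poly_eq_iff)
  have q0: "q \<noteq> 0" using assms(2) by auto
  have "order x0 p = order x0 ([:-x0, 1:]^n) + order x0 q" unfolding p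
    by (rule order_mult) (use q0 in auto)
  also have "\<dots> = n" using order_power_n_n[of x0 n] order_0I[OF assms(2)] by simp
  finally show ?thesis .
qed

lemma card_roots_sqfree:
  fixes p :: "complex poly"
  assumes "p \<noteq> 0" "\<And>x. poly p x = 0 \<Longrightarrow> poly (pderiv p) x \<noteq> 0"
  shows "card {x. poly p x = 0} = degree p"
proof -
  have rs: "rsquarefree p" using assms(2) by (auto simp: rsquarefree_roots)
  have "(\<Sum>x\<in>{x. poly p x = 0}. order x p) = (\<Sum>x\<in>{x. poly p x = 0}. 1)"
    by (rule sum.cong) (simp_all add: rsquarefree_root_order[OF rs _ assms(1)])
  then show ?thesis using sum_order_degree[OF assms(1)] by simp
qed


definition "yv s a x = (2 * a - 1) * ((4 * s + 2) * TT s x ^ 2) / (2 * NN s x)"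

lemma root_props:
  assumes s: "s^2 = 7" and a: "a \<noteq> 1/2" and r: "poly (Gp s ((2 * a - 1)^2)) x = 0"
  shows "TT s x \<noteq> 0" "NN s x \<noteq> 0" "(yv s a x)^2 = cb s x" "Qval s x (yv s a x) = a" "yv s a x \<noteq> 0"
proof -
  define c where "c = (2 * a - 1)^2"
  have a1: "2 * a - 1 \<noteq> 0" using a by (auto simp: field_simps)
  have c0: "c \<noteq> 0" using a1 by (simp add: c_def)
  have r': "(4 * s + 29) * (1 - c) * TT s x^4 + PP s x^3 * RR s x^4 = 0"
    using r by (simp add: poly_Gp c_def)
  show T: "TT s x \<noteq> 0"
  proof
    assume T0: "TT s x = 0"
    then have x: "7 * x = 32 + 10 * s" by (simp add: TT_def algebra_simps)
    have "PP s x^3 * RR s x^4 = 0" using r' T0 by simp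
    then show False using PP_xinf[OF s x] RR_xinf[OF s x] by simp
  qed
  have F: "4 * NN s x^2 * cb s x * (4 * s + 29) = (4 * s + 2)^2 * ((4 * s + 29) * TT s x^4 + PP s x^3 * RR s x^4)"
    by (rule F1[OF s])
  have X: "(4 * s + 29) * TT s x^4 + PP s x^3 * RR s x^4 = c * ((4 * s + 29) * TT s x^4)"
    using r' by (simp add: algebra_simps)
  show N: "NN s x \<noteq> 0"
  proof
    assume N0: "NN s x = 0"
    then have "(4 * s + 2)^2 * ((4 * s + 29) * TT s x^4 + PP s x^3 * RR s x^4) = 0" using F by simp
    then have "(4 * s + 29) * TT s x^4 + PP s x^3 * RR s x^4 = 0" using c42[OF s] by simp
    then have "c * ((4 * s + 29) * TT s x^4) = 0" using X by simp
    then show False using c0 c429[OF s] T by simp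
  qed
  have D: "(4 * s + 2) * TT s x ^ 2 \<noteq> 0" using c42[OF s] T by simp
  have "(4 * NN s x^2 * cb s x) * (4 * s + 29) = ((4 * s + 2)^2 * c * TT s x^4) * (4 * s + 29)"
    using F X by algebra
  then have "4 * NN s x^2 * cb s x = (4 * s + 2)^2 * c * TT s x^4" using c429[OF s] by simp
  then have cbx: "cb s x = c * (4 * s + 2)^2 * TT s x^4 / (4 * NN s x^2)"
    using N by (simp add: field_simps)
  show "(yv s a x)^2 = cb s x" unfolding cbx yv_def c_def
    by (simp add: power_divide power_mult_distrib flip: power_mult)
  have gen: "D \<noteq> 0 \<Longrightarrow> M \<noteq> 0 \<Longrightarrow> 1/2 + M / D * ((2 * a - 1) * D / (2 * M)) = a" for D M :: complex
    by (simp add: field_simps)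
  show "Qval s x (yv s a x) = a" unfolding Qval_alt yv_def using gen[OF D N] .
  show "yv s a x \<noteq> 0" unfolding yv_def using a1 D N by simp
qed

lemma fib_gen:
  assumes s: "s^2 = 7" and a: "a \<noteq> 1/2"
  shows "fib (curveE s) (Qpsi4 s) (Some a) = (\<lambda>x. Some (x, yv s a x)) ` {x. poly (Gp s ((2 * a - 1)^2)) x = 0}"
proof
  show "fib (curveE s) (Qpsi4 s) (Some a) \<subseteq> (\<lambda>x. Some (x, yv s a x)) ` {x. poly (Gp s ((2 * a - 1)^2)) x = 0}"
  proof
    fix Q assume Q: "Q \<in> fib (curveE s) (Qpsi4 s) (Some a)"
    then obtain x y where Qxy: "Q = Some (x, y)" by (cases Q) (auto simp: fib_def Qpsi4_None)
    then have y: "y^2 = cb s x" and T: "TT s x \<noteq> 0" and q: "Qval s x y = a"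
      using Q by (auto simp: fib_def curve_Some Qpsi4_Some split: if_splits)
    have "poly (Gp s ((2 * a - 1)^2)) x = 0" using Gp_Q[OF s y T] q by simp
    moreover have "y = yv s a x"
    proof -
      have N: "NN s x \<noteq> 0"
      proof
        assume "NN s x = 0" then have "Qval s x y = 1/2" by (simp add: Qval_alt)
        then show False using q a by simp
      qed
      have D: "(4 * s + 2) * TT s x ^ 2 \<noteq> 0" using c42[OF s] T by simp
      have "NN s x / ((4 * s + 2) * TT s x ^ 2) * y = Qval s x y - 1/2" by (simp add: Qval_alt)
      then have "NN s x / ((4 * s + 2) * TT s x ^ 2) * y = a - 1/2" using q by simp
      then show ?thesis unfolding yv_def using N D by (simp add: field_simps)
    qed
    ultimately show "Q \<in> (\<lambda>x. Some (x, yv s a x)) ` {x. poly (Gp s ((2 * a - 1)^2)) x = 0}"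
      using Qxy by blast
  qed
  show "(\<lambda>x. Some (x, yv s a x)) ` {x. poly (Gp s ((2 * a - 1)^2)) x = 0} \<subseteq> fib (curveE s) (Qpsi4 s) (Some a)"
  proof safe
    fix x assume r: "poly (Gp s ((2 * a - 1)^2)) x = 0"
    note rp = root_props[OF s a r]
    show "Some (x, yv s a x) \<in> fib (curveE s) (Qpsi4 s) (Some a)"
      using rp by (simp add: fib_def curve_Some Qpsi4_Some)
  qed
qed

lemma ram_fib_gen:
  assumes s: "s^2 = 7" and a: "a \<noteq> 1/2" and r: "poly (Gp s ((2 * a - 1)^2)) x = 0"
  shows "ram_index (curveE s) (Qpsi4 s) (Some (x, yv s a x)) = order x (Gp s ((2 * a - 1)^2))"
proof -
  note rp = root_props[OF s a r]
  have "has_ram_index (curveE s) (Qpsi4 s) (Some (x, yv s a x)) (order x (Gp s ((2 * Qval s x (yv s a x) - 1)^2)))"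
    by (rule ram_generic[OF s rp(3) rp(5) rp(1)]) (use rp(4) a in simp)
  then show ?thesis using rp(4) by (simp add: ram_index_eq)
qed

lemma sum_gen:
  assumes s: "s^2 = 7" and a: "a \<noteq> 1/2"
  shows "finite (fib (curveE s) (Qpsi4 s) (Some a)) \<and>
         (\<Sum>Q\<in>fib (curveE s) (Qpsi4 s) (Some a). ram_index (curveE s) (Qpsi4 s) Q) = 7"
proof -
  define R where "R = {x. poly (Gp s ((2 * a - 1)^2)) x = 0}"
  have fR: "finite R" unfolding R_def using Gp_nz by (rule poly_roots_finite)
  have inj: "inj_on (\<lambda>x. Some (x, yv s a x)) R" by (auto simp: inj_on_def)
  have "(\<Sum>Q\<in>fib (curveE s) (Qpsi4 s) (Some a). ram_index (curveE s) (Qpsi4 s) Q)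
      = (\<Sum>x\<in>R. ram_index (curveE s) (Qpsi4 s) (Some (x, yv s a x)))"
    unfolding fib_gen[OF s a] R_def[symmetric] by (rule sum.reindex_cong[OF inj refl]) simp
  also have "\<dots> = (\<Sum>x\<in>R. order x (Gp s ((2 * a - 1)^2)))"
    by (rule sum.cong) (auto simp: R_def ram_fib_gen[OF s a])
  also have "\<dots> = 7" unfolding R_def by (simp add: sum_order_degree Gp_nz degree_Gp)
  finally show ?thesis using fR unfolding fib_gen[OF s a] R_def[symmetric] by simp
qed


lemma Qhalf:
  assumes s: "s^2 = 7" and T: "TT s x \<noteq> 0"
  shows "Qval s x y = 1/2 \<longleftrightarrow> NN s x = 0 \<or> y = 0"
proof -
  have D: "(4 * s + 2) * TT s x ^ 2 \<noteq> 0" using c42[OF s] T by simp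
  have "Qval s x y = 1/2 \<longleftrightarrow> NN s x / ((4 * s + 2) * TT s x ^ 2) * y = 0" by (simp add: Qval_alt)
  also have "\<dots> \<longleftrightarrow> NN s x = 0 \<or> y = 0" using D by simp
  finally show ?thesis .
qed

lemma exists_ram:
  assumes s: "s^2 = 7" and P: "P \<in> curveE s"
  shows "\<exists>e. has_ram_index (curveE s) (Qpsi4 s) P e"
proof (cases P)
  case None then show ?thesis using ram_inf[OF s] by blast
next
  case (Some p)
  then obtain x y where Pxy: "P = Some (x, y)" by (cases p) auto
  then have y: "y^2 = cb s x" using P by (simp add: curve_Some)
  show ?thesis
  proof (cases "TT s x = 0")
    case True then show ?thesis using ram_pole[OF s y] Pxy by blast
  next
    case T: False
    show ?thesis
    proof (cases "y = 0")
      case True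
      then have "cb s x = 0" using y by simp
      then show ?thesis using ram_branch[OF s] Pxy True by blast
    next
      case y0: False
      show ?thesis
      proof (cases "NN s x = 0")
        case True then show ?thesis using ram_half[OF s y y0 T True] Pxy by blast
      next
        case False
        then have "Qval s x y \<noteq> 1/2" using Qhalf[OF s T] y0 by simp
        then show ?thesis using ram_generic[OF s y y0 T] Pxy by blast
      qed
    qed
  qed
qed

definition "NNp s = [:344 * s + 1036, -(72 * s + 252), 27:]"
definition "cbp s = [:0, 16 * s + 35, -(4 * s + 7), 1:]"

lemma poly_NNp: "poly (NNp s) x = NN s x" unfolding NNp_def NN_def by (simp add: algebra_simps power2_eq_square)
lemma poly_cbp: "poly (cbp s) x = cb s x" unfolding cbp_def cb_def by (simp add: algebra_simps power2_eq_square)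
lemma pderiv_NNp: "poly (pderiv (NNp s)) x = NNd s x" unfolding NNp_def NNd_def by (simp add: pderiv_pCons algebra_simps)
lemma pderiv_cbp: "poly (pderiv (cbp s)) x = cbd s x" unfolding cbp_def cbd_def by (simp add: pderiv_pCons algebra_simps power2_eq_square)

lemma card_NN_roots: assumes s: "s^2 = 7" shows "card {x. NN s x = 0} = 2"
proof -
  have "degree (NNp s) = 2" by (simp add: NNp_def)
  then have nz: "NNp s \<noteq> 0" by auto
  have "card {x. poly (NNp s) x = 0} = degree (NNp s)"
    by (rule card_roots_sqfree[OF nz]) (use B3[OF s] in \<open>auto simp: poly_NNp pderiv_NNp\<close>)
  then have "card {x. poly (NNp s) x = 0} = 2" using \<open>degree (NNp s) = 2\<close> by simp
  then show ?thesis by (simp only: poly_NNp)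
qed

lemma card_cb_roots: assumes s: "s^2 = 7" shows "card {x. cb s x = 0} = 3"
proof -
  have "degree (cbp s) = 3" by (simp add: cbp_def)
  then have nz: "cbp s \<noteq> 0" by auto
  have "card {x. poly (cbp s) x = 0} = degree (cbp s)"
    by (rule card_roots_sqfree[OF nz]) (use B2[OF s] in \<open>auto simp: poly_cbp pderiv_cbp\<close>)
  then have "card {x. poly (cbp s) x = 0} = 3" using \<open>degree (cbp s) = 3\<close> by simp
  then show ?thesis by (simp only: poly_cbp)
qed

lemma finite_NN_roots: "finite {x. NN s x = 0}"
proof -
  have "degree (NNp s) = 2" by (simp add: NNp_def)
  then have nz: "NNp s \<noteq> 0" by auto
  show ?thesis using poly_roots_finite[OF nz] by (simp add: poly_NNp)
qed

lemma finite_cb_roots: "finite {x. cb s x = 0}"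
proof -
  have "degree (cbp s) = 3" by (simp add: cbp_def)
  then have nz: "cbp s \<noteq> 0" by auto
  show ?thesis using poly_roots_finite[OF nz] by (simp add: poly_cbp)
qed

lemma fib_half:
  assumes s: "s^2 = 7"
  shows "fib (curveE s) (Qpsi4 s) (Some (1/2)) =
     (\<lambda>(x, y). Some (x, y)) ` (SIGMA x:{x. NN s x = 0}. {y. y^2 = cb s x}) \<union> (\<lambda>x. Some (x, 0)) ` {x. cb s x = 0}"
    (is "?F = ?A \<union> ?B")
proof
  show "?F \<subseteq> ?A \<union> ?B"
  proof
    fix Q assume Q: "Q \<in> ?F"
    then obtain x y where Qxy: "Q = Some (x, y)" by (cases Q) (auto simp: fib_def Qpsi4_None)
    then have y: "y^2 = cb s x" and T: "TT s x \<noteq> 0" and q: "Qval s x y = 1/2"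
      using Q by (auto simp: fib_def curve_Some Qpsi4_Some split: if_splits)
    then have "NN s x = 0 \<or> y = 0" using Qhalf[OF s T] by simp
    then show "Q \<in> ?A \<union> ?B"
    proof
      assume "NN s x = 0" then show ?thesis using Qxy y by auto
    next
      assume "y = 0" then show ?thesis using Qxy y by auto
    qed
  qed
  show "?A \<union> ?B \<subseteq> ?F"
  proof
    fix Q assume "Q \<in> ?A \<union> ?B"
    then show "Q \<in> ?F"
    proof
      assume "Q \<in> ?A"
      then obtain x y where Qxy: "Q = Some (x, y)" "NN s x = 0" "y^2 = cb s x" by auto
      have T: "TT s x \<noteq> 0"
      proof
        assume "TT s x = 0" then have "7 * x = 32 + 10 * s" by (simp add: TT_def algebra_simps)
        from NN_xinf[OF s this] Qxy(2) show False by simp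
      qed
      then show ?thesis using Qxy Qhalf[OF s T] by (simp add: fib_def curve_Some Qpsi4_Some)
    next
      assume "Q \<in> ?B"
      then obtain x where Qx: "Q = Some (x, 0)" "cb s x = 0" by auto
      have T: "TT s x \<noteq> 0"
      proof
        assume "TT s x = 0" then have "7 * x = 32 + 10 * s" by (simp add: TT_def algebra_simps)
        from cb_xinf[OF s this] Qx(2) show False by simp
      qed
      then show ?thesis using Qx Qhalf[OF s T] by (simp add: fib_def curve_Some Qpsi4_Some)
    qed
  qed
qed

lemma sum_half:
  assumes s: "s^2 = 7"
  shows "finite (fib (curveE s) (Qpsi4 s) (Some (1/2))) \<and>
         (\<Sum>Q\<in>fib (curveE s) (Qpsi4 s) (Some (1/2)). ram_index (curveE s) (Qpsi4 s) Q) = 7"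
proof -
  define S where "S = (SIGMA x:{x. NN s x = 0}. {y. y^2 = cb s x})"
  define A where "A = (\<lambda>(x, y). Some (x, y)) ` S"
  define B where "B = (\<lambda>x. Some (x, 0 :: complex)) ` {x. cb s x = 0}"
  have F: "fib (curveE s) (Qpsi4 s) (Some (1/2)) = A \<union> B" unfolding A_def B_def S_def by (rule fib_half[OF s])
  have cbnz: "cb s x \<noteq> 0" if "NN s x = 0" for x using B1[OF s that] by blast
  have cardy: "card {y. y^2 = cb s x} = 2" if "NN s x = 0" for x
    using card_nth_roots[of "cb s x" 2] cbnz[OF that] by simp
  have fy: "finite {y. y^2 = cb s x}" if "NN s x = 0" for x
    using cardy[OF that] by (metis card.infinite zero_neq_numeral)
  have fS: "finite S" unfolding S_def using finite_NN_roots fy by (intro finite_SigmaI) auto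
  have cS: "card S = 4"
  proof -
    have "card S = (\<Sum>x\<in>{x. NN s x = 0}. card {y. y^2 = cb s x})"
      unfolding S_def using finite_NN_roots fy by (intro card_SigmaI) auto
    also have "\<dots> = (\<Sum>x\<in>{x. NN s x = 0}. 2)" by (rule sum.cong) (auto simp: cardy)
    also have "\<dots> = 4" using card_NN_roots[OF s] by simp
    finally show ?thesis .
  qed
  have injA: "inj_on (\<lambda>(x, y). Some (x, y)) S" by (auto simp: inj_on_def)
  have cA: "card A = 4" unfolding A_def using card_image[OF injA] cS by simp
  have cB: "card B = 3" unfolding B_def using card_cb_roots[OF s] by (subst card_image) (auto simp: inj_on_def)
  have fA: "finite A" unfolding A_def using fS by simp
  have fB: "finite B" unfolding B_def using finite_cb_roots by simp
  have disj: "A \<inter> B = {}" unfolding A_def B_def S_def using B1[OF s] by auto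
  have ram1: "ram_index (curveE s) (Qpsi4 s) Q = 1" if Q: "Q \<in> A \<union> B" for Q
  proof -
    have "has_ram_index (curveE s) (Qpsi4 s) Q 1"
    proof (cases "Q \<in> A")
      case True
      then obtain x y where Qxy: "Q = Some (x, y)" "NN s x = 0" "y^2 = cb s x" by (auto simp: A_def S_def)
      have y0: "y \<noteq> 0" using cbnz[OF Qxy(2)] Qxy(3) by auto
      have T: "TT s x \<noteq> 0"
      proof
        assume "TT s x = 0" then have "7 * x = 32 + 10 * s" by (simp add: TT_def algebra_simps)
        from NN_xinf[OF s this] Qxy(2) show False by simp
      qed
      show ?thesis using ram_half[OF s Qxy(3) y0 T Qxy(2)] Qxy(1) by simp
    next
      case False
      then have "Q \<in> B" using Q by simp
      then obtain x where Qx: "Q = Some (x, 0)" "cb s x = 0" by (auto simp: B_def)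
      show ?thesis using ram_branch[OF s Qx(2)] Qx(1) by simp
    qed
    then show ?thesis by (rule ram_index_eq)
  qed
  have "(\<Sum>Q\<in>A \<union> B. ram_index (curveE s) (Qpsi4 s) Q) = (\<Sum>Q\<in>A \<union> B. 1)"
    by (rule sum.cong) (auto simp: ram1)
  also have "\<dots> = card (A \<union> B)" by simp
  also have "\<dots> = 7" using card_Un_disjoint[OF fA fB disj] cA cB by simp
  finally show ?thesis unfolding F using fA fB by simp
qed


lemma fib_none:
  assumes s: "s^2 = 7"
  defines "xi \<equiv> (10 * s + 32) / 7" and "yi \<equiv> csqrt (cb s ((10 * s + 32) / 7))"
  shows "fib (curveE s) (Qpsi4 s) None = {None, Some (xi, yi), Some (xi, - yi)}"
proof -
  have Txi: "TT s x = 0 \<longleftrightarrow> x = xi" for x unfolding xi_def TT_def by (auto simp: field_simps)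
  have yi2: "yi^2 = cb s xi" by (simp add: yi_def xi_def)
  show ?thesis
  proof (intro set_eqI iffI)
    fix Q assume Q: "Q \<in> fib (curveE s) (Qpsi4 s) None"
    show "Q \<in> {None, Some (xi, yi), Some (xi, - yi)}"
    proof (cases Q)
      case None then show ?thesis by simp
    next
      case (Some p)
      then obtain x y where Qxy: "Q = Some (x, y)" by (cases p) auto
      then have y: "y^2 = cb s x" and T: "TT s x = 0"
        using Q by (auto simp: fib_def curve_Some Qpsi4_Some split: if_splits)
      have x: "x = xi" using T Txi by simp
      have "y^2 = yi^2" using y x yi2 by simp
      then have "y = yi \<or> y = - yi" by (rule sq_cases)
      then show ?thesis using Qxy x by auto
    qed
  next
    fix Q assume "Q \<in> {None, Some (xi, yi), Some (xi, - yi)}"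
    then show "Q \<in> fib (curveE s) (Qpsi4 s) None"
      using yi2 Txi by (auto simp: fib_def curve_Some curve_None Qpsi4_Some Qpsi4_None)
  qed
qed

lemma none_facts:
  assumes s: "s^2 = 7"
  defines "xi \<equiv> (10 * s + 32) / 7" and "yi \<equiv> csqrt (cb s ((10 * s + 32) / 7))"
  shows "yi \<noteq> - yi" "ram_index (curveE s) (Qpsi4 s) None = 3"
    "ram_index (curveE s) (Qpsi4 s) (Some (xi, yi)) = 2" "ram_index (curveE s) (Qpsi4 s) (Some (xi, - yi)) = 2"
proof -
  have x: "7 * xi = 32 + 10 * s" by (simp add: xi_def)
  have T: "TT s xi = 0" unfolding TT_def xi_def by (simp add: field_simps)
  have yi2: "yi^2 = cb s xi" by (simp add: yi_def xi_def)
  have "yi \<noteq> 0" using cb_xinf[OF s x] yi2 by auto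
  then show "yi \<noteq> - yi" by (simp add: eq_neg_iff_add_eq_0)
  show "ram_index (curveE s) (Qpsi4 s) None = 3" by (rule ram_index_eq[OF ram_inf[OF s]])
  show "ram_index (curveE s) (Qpsi4 s) (Some (xi, yi)) = 2" using ram_pole[OF s yi2 T] by (rule ram_index_eq)
  have "(- yi)^2 = cb s xi" using yi2 by simp
  then show "ram_index (curveE s) (Qpsi4 s) (Some (xi, - yi)) = 2" using ram_pole[OF s _ T] by (metis ram_index_eq)
qed

lemma x12_ne: assumes s: "(s::complex)^2 = 7" shows "(4 * s + 29) / 9 \<noteq> 2 * s + 4"
proof
  assume "(4 * s + 29) / 9 = 2 * s + 4"
  then have "7 + 14 * s = 0" by (simp add: field_simps)
  from sqrt7_lin[OF s this] show False by simp
qed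

lemma roots_G1:
  assumes s: "s^2 = 7"
  shows "{x. poly (Gp s 1) x = 0} = {(4 * s + 29) / 9, 2 * s + 4}"
  by (auto simp: poly_Gp PP_def RR_def field_simps)

lemma orders_G1:
  assumes s: "s^2 = 7"
  shows "order ((4 * s + 29) / 9) (Gp s 1) = 3" "order (2 * s + 4) (Gp s 1) = 4"
proof -
  define x1 where "x1 = (4 * s + 29) / 9"
  define x2 where "x2 = 2 * s + 4"
  have ne: "x1 \<noteq> x2" using x12_ne[OF s] by (simp add: x1_def x2_def)
  have P: "PP s z = 9 * (z - x1)" for z by (simp add: PP_def x1_def field_simps)
  have R: "RR s z = z - x2" for z by (simp add: RR_def x2_def)
  have pG: "poly (Gp s 1) z = 729 * (z - x1)^3 * (z - x2)^4" for z
    unfolding poly_Gp P R by algebra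
  show "order ((4 * s + 29) / 9) (Gp s 1) = 3" unfolding x1_def[symmetric]
    by (rule order_factor[where q="smult 729 ([:-x2, 1:]^4)"]) (use ne in \<open>simp_all add: pG poly_power\<close>)
  show "order (2 * s + 4) (Gp s 1) = 4" unfolding x2_def[symmetric]
    by (rule order_factor[where q="smult 729 ([:-x1, 1:]^3)"]) (use ne in \<open>simp_all add: pG poly_power\<close>)
qed

lemma passport01:
  assumes s: "s^2 = 7" and a: "a = 0 \<or> a = 1"
  shows "passport_at (curveE s) (Qpsi4 s) (Some a) = {#4, 3#}"
proof -
  have a2: "a \<noteq> 1/2" "(2 * a - 1)^2 = 1" using a by auto
  define x1 where "x1 = (4 * s + 29) / 9"
  define x2 where "x2 = 2 * s + 4"
  have ne: "x1 \<noteq> x2" using x12_ne[OF s] by (simp add: x1_def x2_def)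
  have F: "fib (curveE s) (Qpsi4 s) (Some a) = {Some (x1, yv s a x1), Some (x2, yv s a x2)}"
    unfolding fib_gen[OF s a2(1)] a2(2) roots_G1[OF s] x1_def x2_def by auto
  have r1: "poly (Gp s ((2 * a - 1)^2)) x1 = 0" "poly (Gp s ((2 * a - 1)^2)) x2 = 0"
    unfolding a2(2) using roots_G1[OF s] by (auto simp: x1_def x2_def)
  have "ram_index (curveE s) (Qpsi4 s) (Some (x1, yv s a x1)) = 3"
    using ram_fib_gen[OF s a2(1) r1(1)] orders_G1[OF s] a2(2) by (simp add: x1_def)
  moreover have "ram_index (curveE s) (Qpsi4 s) (Some (x2, yv s a x2)) = 4"
    using ram_fib_gen[OF s a2(1) r1(2)] orders_G1[OF s] a2(2) by (simp add: x2_def)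
  ultimately show ?thesis unfolding passport_at_def F using ne by (simp add: add_mset_commute)
qed

lemma Gp_deriv:
  "poly (pderiv (Gp s c)) x = 28 * (4 * s + 29) * (1 - c) * TT s x^3 + 27 * PP s x^2 * RR s x^4 + 4 * PP s x^3 * RR s x^3"
proof -
  have e: "poly (Gp s c) = (\<lambda>x. (4 * s + 29) * (1 - c) * (7 * x - 10 * s - 32)^4 + (9 * x - 4 * s - 29)^3 * (x - 2 * s - 4)^4)"
    by (rule ext) (simp add: poly_Gp TT_def PP_def RR_def)
  have "((\<lambda>x. (4 * s + 29) * (1 - c) * (7 * x - 10 * s - 32)^4 + (9 * x - 4 * s - 29)^3 * (x - 2 * s - 4)^4)
      has_field_derivative ((4 * s + 29) * (1 - c) * (of_nat 4 * (7 * x - 10 * s - 32)^3 * 7) +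
        ((of_nat 3 * (9 * x - 4 * s - 29)^2 * 9) * (x - 2 * s - 4)^4 + (9 * x - 4 * s - 29)^3 * (of_nat 4 * (x - 2 * s - 4)^3 * 1)))) (at x)"
    by (intro derivative_intros DERIV_power_Suc derivative_eq_intros) (auto simp: numeral_eq_Suc)
  then have d: "(poly (Gp s c) has_field_derivative ((4 * s + 29) * (1 - c) * (of_nat 4 * (7 * x - 10 * s - 32)^3 * 7) +
        ((of_nat 3 * (9 * x - 4 * s - 29)^2 * 9) * (x - 2 * s - 4)^4 + (9 * x - 4 * s - 29)^3 * (of_nat 4 * (x - 2 * s - 4)^3 * 1)))) (at x)"
    unfolding e .
  have "poly (pderiv (Gp s c)) x = (4 * s + 29) * (1 - c) * (of_nat 4 * (7 * x - 10 * s - 32)^3 * 7) +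
        ((of_nat 3 * (9 * x - 4 * s - 29)^2 * 9) * (x - 2 * s - 4)^4 + (9 * x - 4 * s - 29)^3 * (of_nat 4 * (x - 2 * s - 4)^3 * 1))"
    by (rule DERIV_unique[OF poly_DERIV d])
  then show ?thesis by (simp add: TT_def PP_def RR_def algebra_simps)
qed

lemma Gp_sqfree:
  assumes s: "s^2 = 7" and c: "c \<noteq> 0" "c \<noteq> 1" and r: "poly (Gp s c) z = 0"
  shows "poly (pderiv (Gp s c)) z \<noteq> 0"
proof
  assume d: "poly (pderiv (Gp s c)) z = 0"
  define K where "K = 4 * s + 29"
  have K: "K \<noteq> 0" using c429[OF s] by (simp add: K_def)
  have g0: "K * (1 - c) * TT s z^4 + PP s z^3 * RR s z^4 = 0" using r by (simp add: poly_Gp K_def)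
  have g1: "28 * K * (1 - c) * TT s z^3 + 27 * PP s z^2 * RR s z^4 + 4 * PP s z^3 * RR s z^3 = 0"
    using d by (simp add: Gp_deriv K_def)
  have "TT s z * (28 * K * (1 - c) * TT s z^3 + 27 * PP s z^2 * RR s z^4 + 4 * PP s z^3 * RR s z^3)
      - 28 * (K * (1 - c) * TT s z^4 + PP s z^3 * RR s z^4)
      = PP s z^2 * RR s z^3 * (27 * RR s z * TT s z + 4 * PP s z * TT s z - 28 * PP s z * RR s z)"
    by algebra
  then have "PP s z^2 * RR s z^3 * (7 * NN s z) = 0" using g0 g1 F2[OF s] by simp
  then have "PP s z = 0 \<or> RR s z = 0 \<or> NN s z = 0" by simp
  moreover have TTc: False if "TT s z \<noteq> 0" "PP s z^3 * RR s z^4 = 0"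
  proof -
    have "K * (1 - c) * TT s z^4 = 0" using g0 that(2) by simp
    then show False using K c that(1) by simp
  qed
  ultimately show False
  proof (elim disjE)
    assume P: "PP s z = 0"
    then have "9 * z = 29 + 4 * s" by (simp add: PP_def algebra_simps)
    from TT_x1[OF s this] P show False using TTc by simp
  next
    assume R: "RR s z = 0"
    then have "1 * z = 4 + 2 * s" by (simp add: RR_def algebra_simps)
    from TT_x2[OF s this] R show False using TTc by simp
  next
    assume N: "NN s z = 0"
    have T: "TT s z \<noteq> 0"
    proof
      assume "TT s z = 0" then have "7 * z = 32 + 10 * s" by (simp add: TT_def algebra_simps)
      from NN_xinf[OF s this] N show False by simp
    qed
    have "(4 * s + 2)^2 * (K * TT s z^4 + PP s z^3 * RR s z^4) = 0" using F1[OF s, of z] N by (simp add: K_def)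
    then have "K * TT s z^4 + PP s z^3 * RR s z^4 = 0" using c42[OF s] by simp
    then have "c * (K * TT s z^4) = 0" using g0 by (simp add: algebra_simps)
    then show False using c K T by simp
  qed
qed

lemma unram:
  assumes s: "s^2 = 7" and P: "P \<in> curveE s" and f: "Qpsi4 s P \<notin> {Some 0, Some 1, None}"
  shows "ram_index (curveE s) (Qpsi4 s) P = 1"
proof -
  obtain x y where Pxy: "P = Some (x, y)" using f by (cases P) (auto simp: Qpsi4_None)
  have y: "y^2 = cb s x" using P Pxy by (simp add: curve_Some)
  have T: "TT s x \<noteq> 0" using f Pxy by (auto simp: Qpsi4_Some)
  define a where "a = Qval s x y"
  have a01: "a \<noteq> 0" "a \<noteq> 1" using f Pxy T by (auto simp: Qpsi4_Some a_def)
  have "has_ram_index (curveE s) (Qpsi4 s) P 1"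
  proof (cases "y = 0")
    case True then show ?thesis using ram_branch[OF s] y Pxy by simp
  next
    case y0: False
    show ?thesis
    proof (cases "NN s x = 0")
      case True then show ?thesis using ram_half[OF s y y0 T True] Pxy by simp
    next
      case False
      then have ah: "a \<noteq> 1/2" using Qhalf[OF s T] y0 by (simp add: a_def)
      define c where "c = (2 * a - 1)^2"
      have c0: "c \<noteq> 0" using ah by (auto simp: c_def field_simps)
      have c1: "c \<noteq> 1"
      proof
        assume "c = 1"
        then have "(2 * a - 1 - 1) * (2 * a - 1 + 1) = 0" by (simp add: c_def algebra_simps power2_eq_square)
        then show False using a01 by auto
      qed
      have h: "has_ram_index (curveE s) (Qpsi4 s) P (order x (Gp s c))"
        using ram_generic[OF s y y0 T] ah Pxy by (simp add: a_def c_def)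
      have r: "poly (Gp s c) x = 0" using Gp_Q[OF s y T] by (simp add: c_def a_def)
      have rs: "rsquarefree (Gp s c)" using Gp_sqfree[OF s c0 c1] by (auto simp: rsquarefree_roots)
      have "order x (Gp s c) = 1" by (rule rsquarefree_root_order[OF rs r Gp_nz])
      then show ?thesis using h by simp
    qed
  qed
  then show ?thesis by (rule ram_index_eq)
qed


theorem mainTheorem3:
  fixes s :: complex
  assumes "s^2 = 7"
  shows "(\<forall>x y. Some (x, y) \<in> curveE s \<and> 7 * x - 10 * s - 32 \<noteq> 0 \<longrightarrow>
            (2 * Qval s x y - 1)^2 = 1 - psi4 s x) \<and>
         belyi_map_passport (curveE s) (Qpsi4 s) 7 {#4, 3#} {#4, 3#} {#2, 2, 3#}"
proof -
  note s = assms
  have part1: "\<forall>x y. Some (x, y) \<in> curveE s \<and> 7 * x - 10 * s - 32 \<noteq> 0 \<longrightarrow>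
            (2 * Qval s x y - 1)^2 = 1 - psi4 s x"
  proof (intro allI impI)
    fix x y assume h: "Some (x, y) \<in> curveE s \<and> 7 * x - 10 * s - 32 \<noteq> 0"
    then have y: "y^2 = cb s x" and T: "TT s x \<noteq> 0" by (auto simp: curve_Some TT_def)
    show "(2 * Qval s x y - 1)^2 = 1 - psi4 s x" by (rule key_identity[OF s y T])
  qed
  define xi where "xi = (10 * s + 32) / 7"
  define yi where "yi = csqrt (cb s ((10 * s + 32) / 7))"
  note nf = none_facts[OF s, folded xi_def yi_def]
  have FN: "fib (curveE s) (Qpsi4 s) None = {None, Some (xi, yi), Some (xi, - yi)}"
    using fib_none[OF s] by (simp add: xi_def yi_def)
  have ne: "Some (xi, yi) \<noteq> Some (xi, - yi)" using nf(1) by simp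
  have sumN: "finite (fib (curveE s) (Qpsi4 s) None) \<and>
      (\<Sum>Q\<in>fib (curveE s) (Qpsi4 s) None. ram_index (curveE s) (Qpsi4 s) Q) = 7"
    unfolding FN using ne nf(2-4) by simp
  have sums: "finite (fib (curveE s) (Qpsi4 s) w) \<and>
      (\<Sum>Q\<in>fib (curveE s) (Qpsi4 s) w. ram_index (curveE s) (Qpsi4 s) Q) = 7" for w
  proof (cases w)
    case None then show ?thesis using sumN by simp
  next
    case (Some a)
    show ?thesis
    proof (cases "a = 1/2")
      case True then show ?thesis using sum_half[OF s] Some by (simp only:)
    next
      case False then show ?thesis using sum_gen[OF s False] Some by simp
    qed
  qed
  have pN: "passport_at (curveE s) (Qpsi4 s) None = {#2, 2, 3#}"
    unfolding passport_at_def FN using ne nf(2-4) by (simp add: add_mset_commute)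
  have part2: "belyi_map_passport (curveE s) (Qpsi4 s) 7 {#4, 3#} {#4, 3#} {#2, 2, 3#}"
    unfolding belyi_map_passport_def
    using exists_ram[OF s] sums unram[OF s] passport01[OF s] pN by auto
  show ?thesis using part1 part2 by blast
qed


end
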